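(* Assume the periodic setting below, let $\mu>0$, and let $K\ge1$ be a constant with $|u|_{p^*(x)}\le K\|u\|$ for all $u\in W^{1,p(x)}(\mathbb{R}^N)$. Let $\nu=\frac1{p_+}-\frac1{q_-}$. Let $(v_n)$ be a $(PS)_d$ sequence for $I_\infty$ with $d<\frac{\nu}{2K^{p_+}}$. Then there exists $n_0\in\mathbb{N}$ such that for all $n\ge n_0$, $$\Big(\int_{\mathbb{R}^N}|v_n|^{p^*(x)}\Big)^{1/p^*_-}\le K\Big(\int_{\mathbb{R}^N}(|\nabla v_n|^{p(x)}+V(x)|v_n|^{p(x)})\Big)^{1/p_+}.$$
   Context: Periodic setting: $N\ge2$; $p:\mathbb{R}^N\to\mathbb{R}$ Lipschitz, $q,V:\mathbb{R}^N\to[0,\infty)$ continuous and $\mathbb{Z}^N$-periodic; $1<p_-\le p\le p_+<N$; $p_+<q_-\le q\ll p^*$; $\inf V=V_0>0$ ($h_\pm$ ess sup/inf, $h^*=Nh/(N-h)$, $h\ll g$ means $\inf(g-h)>0$). $|u|_{h(x)}=\inf\{\lambda>0:\int|u/\lambda|^{h(x)}\le1\}$ and $\|u\|=\inf\{\lambda>0:\int(|\nabla u/\lambda|^{p(x)}+V|u/\lambda|^{p(x)})\le1\}$ on $W^{1,p(x)}(\mathbb{R}^N)$. $I_\infty(u)=\int\frac{1}{p(x)}(|\nabla u|^{p(x)}+V|u|^{p(x)})-\mu\int\frac{|u|^{q(x)}}{q(x)}-\int\frac{|u|^{p^*(x)}}{p^*(x)}$. $(PS)_d$ sequence: $I_\infty(v_n)\to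 d$, $I_\infty'(v_n)\to0$. *)

theory Defs
  imports "HOL-Analysis.Analysis"
begin

fun ddiff :: "'a::euclidean_space list \<Rightarrow> ('a \<Rightarrow> real) \<Rightarrow> ('a \<Rightarrow> real)" where
  "ddiff [] f = f"
| "ddiff (h # hs) f = (\<lambda>x. frechet_derivative (ddiff hs f) (at x) h)"

definition smooth_fun :: "('a::euclidean_space \<Rightarrow> real) \<Rightarrow> bool" where
  "smooth_fun f \<longleftrightarrow> (\<forall>hs x. ddiff hs f differentiable (at x))"

definition test_fun :: "('a::euclidean_space \<Rightarrow> real) \<Rightarrow> bool" where
  "test_fun \<phi> \<longleftrightarrow> smooth_fun \<phi> \<and> (\<exists>R. \<forall>x. R < norm x \<longrightarrow> \<phi> x = 0)"

definition weak_grad :: "('a::euclidean_space \<Rightarrow> real) \<Rightarrow> ('a \<Rightarrow> 'a) \<Rightarrow> bool" where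
  "weak_grad u g \<longleftrightarrow> u \<in> borel_measurable lborel \<and> g \<in> borel_measurable lborel \<and>
     (\<forall>r. set_integrable lborel (cball 0 r) u \<and> set_integrable lborel (cball 0 r) (\<lambda>x. norm (g x))) \<and>
     (\<forall>\<phi> i. test_fun \<phi> \<longrightarrow> i \<in> Basis \<longrightarrow>
        (\<integral>x. u x * frechet_derivative \<phi> (at x) i \<partial>lborel) = - (\<integral>x. (g x \<bullet> i) * \<phi> x \<partial>lborel))"

definition lp_mem :: "('a::euclidean_space \<Rightarrow> real) \<Rightarrow> ('a \<Rightarrow> real) \<Rightarrow> bool" where
  "lp_mem h u \<longleftrightarrow> u \<in> borel_measurable lborel \<and>
     (\<integral>\<^sup>+ x. ennreal (\<bar>u x\<bar> powr h x) \<partial>lborel) < \<infinity>"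

definition sobW :: "('a::euclidean_space \<Rightarrow> real) \<Rightarrow> ('a \<Rightarrow> real) set" where
  "sobW p = {u. lp_mem p u \<and> (\<exists>g. weak_grad u g \<and> lp_mem p (\<lambda>x. norm (g x)))}"

definition grad :: "('a::euclidean_space \<Rightarrow> real) \<Rightarrow> ('a \<Rightarrow> real) \<Rightarrow> ('a \<Rightarrow> 'a)" where
  "grad p u = (SOME g. weak_grad u g \<and> lp_mem p (\<lambda>x. norm (g x)))"

definition lux :: "('a::euclidean_space \<Rightarrow> real) \<Rightarrow> ('a \<Rightarrow> real) \<Rightarrow> real" where
  "lux h u = Inf {s. 0 < s \<and> (\<integral>\<^sup>+ x. ennreal ((\<bar>u x\<bar> / s) powr h x) \<partial>lborel) \<le> 1}"

definition wnorm :: "('a::euclidean_space \<Rightarrow> real) \<Rightarrow> ('a \<Rightarrow> real) \<Rightarrow> ('a \<Rightarrow> real) \<Rightarrow> real" where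
  "wnorm V p u = Inf {s. 0 < s \<and>
     (\<integral>\<^sup>+ x. ennreal ((norm (grad p u x) / s) powr p x + V x * (\<bar>u x\<bar> / s) powr p x) \<partial>lborel) \<le> 1}"

definition pstar :: "('a::euclidean_space \<Rightarrow> real) \<Rightarrow> 'a \<Rightarrow> real" where
  "pstar p x = real DIM('a) * p x / (real DIM('a) - p x)"

definition Z_periodic :: "('a::euclidean_space \<Rightarrow> real) \<Rightarrow> bool" where
  "Z_periodic f \<longleftrightarrow> (\<forall>x z. (\<forall>i\<in>Basis. z \<bullet> i \<in> \<int>) \<longrightarrow> f (x + z) = f x)"

definition I_inf :: "real \<Rightarrow> ('a::euclidean_space \<Rightarrow> real) \<Rightarrow> ('a \<Rightarrow> real) \<Rightarrow> ('a \<Rightarrow> real)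
    \<Rightarrow> ('a \<Rightarrow> real) \<Rightarrow> real" where
  "I_inf \<mu> p q V u =
     (\<integral>x. (1 / p x) * (norm (grad p u x) powr p x + V x * \<bar>u x\<bar> powr p x) \<partial>lborel)
     - \<mu> * (\<integral>x. \<bar>u x\<bar> powr q x / q x \<partial>lborel)
     - (\<integral>x. \<bar>u x\<bar> powr pstar p x / pstar p x \<partial>lborel)"

definition I_inf_deriv :: "real \<Rightarrow> ('a::euclidean_space \<Rightarrow> real) \<Rightarrow> ('a \<Rightarrow> real) \<Rightarrow> ('a \<Rightarrow> real)
    \<Rightarrow> ('a \<Rightarrow> real) \<Rightarrow> ('a \<Rightarrow> real) \<Rightarrow> real" where
  "I_inf_deriv \<mu> p q V u \<phi> = deriv (\<lambda>t::real. I_inf \<mu> p q V (\<lambda>x. u x + t * \<phi> x)) 0"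

end

theory Submission
  imports Defs
begin

definition Cn :: "nat \<Rightarrow> ('a::euclidean_space \<Rightarrow> real) \<Rightarrow> bool" where
  "Cn n f \<longleftrightarrow> (\<forall>hs. length hs \<le> n \<longrightarrow> (\<forall>x. ddiff hs f differentiable (at x)))"

abbreviation Dd :: "('a::euclidean_space \<Rightarrow> real) \<Rightarrow> 'a \<Rightarrow> 'a \<Rightarrow> real" where
  "Dd f h \<equiv> (\<lambda>x. frechet_derivative f (at x) h)"

lemma ddiff_snoc: "ddiff (hs @ [h]) f = ddiff hs (Dd f h)"
  by (induction hs) auto

lemma Cn_0: "Cn 0 f \<longleftrightarrow> (\<forall>x. f differentiable (at x))"
  unfolding Cn_def by auto

lemma Cn_Suc: "Cn (Suc n) f \<longleftrightarrow> (\<forall>x. f differentiable (at x)) \<and> (\<forall>h. Cn n (Dd f h))"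
proof
  assume A: "Cn (Suc n) f"
  show "(\<forall>x. f differentiable (at x)) \<and> (\<forall>h. Cn n (Dd f h))"
  proof
    show "\<forall>x. f differentiable (at x)" using A[unfolded Cn_def, rule_format, of "[]"] by auto
    show "\<forall>h. Cn n (Dd f h)"
      unfolding Cn_def
    proof (intro allI impI)
      fix h hs x assume "length (hs::'a list) \<le> n"
      then show "ddiff hs (Dd f h) differentiable (at x)"
        using A[unfolded Cn_def, rule_format, of "hs @ [h]"] by (simp add: ddiff_snoc)
    qed
  qed
next
  assume A: "(\<forall>x. f differentiable (at x)) \<and> (\<forall>h. Cn n (Dd f h))"
  show "Cn (Suc n) f" unfolding Cn_def
  proof (intro allI impI)
    fix hs :: "'a list" and x assume L: "length hs \<le> Suc n"
    show "ddiff hs f differentiable (at x)"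
    proof (cases hs rule: rev_cases)
      case Nil then show ?thesis using A by simp
    next
      case (snoc ys y)
      then show ?thesis using A L unfolding Cn_def by (simp add: ddiff_snoc)
    qed
  qed
qed

lemma smooth_Cn: "smooth_fun f \<longleftrightarrow> (\<forall>n. Cn n f)"
  unfolding smooth_fun_def Cn_def by auto

lemma Cn_mono: "Cn (Suc n) f \<Longrightarrow> Cn n f"
  unfolding Cn_def by auto

lemma Cn_const: "Cn n (\<lambda>x. c)"
proof (induction n arbitrary: c)
  case 0 then show ?case by (simp add: Cn_0)
next
  case (Suc n) then show ?case by (simp add: Cn_Suc)
qed

lemma Cn_linear: assumes f: "bounded_linear f" shows "Cn n f"
proof (cases n)
  case 0 then show ?thesis
    using f by (simp add: Cn_0 bounded_linear_imp_differentiable)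
next
  case (Suc m)
  have "Dd f h = (\<lambda>x. f h)" for h
  proof
    fix x show "frechet_derivative f (at x) h = f h"
      using frechet_derivative_at[OF bounded_linear_imp_has_derivative[OF f]] by metis
  qed
  then show ?thesis using Suc f by (simp add: Cn_Suc Cn_const bounded_linear_imp_differentiable)
qed

lemma fd_add: fixes f g :: "'a::real_normed_vector \<Rightarrow> real" shows "f differentiable (at x) \<Longrightarrow> g differentiable (at x) \<Longrightarrow>
   frechet_derivative (\<lambda>x. f x + g x) (at x) h = frechet_derivative f (at x) h + frechet_derivative g (at x) h"
  by (metis (no_types) frechet_derivative_at frechet_derivative_works has_derivative_add)

lemma fd_mult: fixes f g :: "'a::real_normed_vector \<Rightarrow> real" shows "f differentiable (at x) \<Longrightarrow> g differentiable (at x) \<Longrightarrow>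
   frechet_derivative (\<lambda>x. f x * g x) (at x) h = f x * frechet_derivative g (at x) h + frechet_derivative f (at x) h * g x"
proof -
  assume f: "f differentiable (at x)" and g: "g differentiable (at x)"

  have "((\<lambda>x. f x * g x) has_derivative (\<lambda>h. f x * frechet_derivative g (at x) h + frechet_derivative f (at x) h * g x)) (at x)"
    using has_derivative_mult[OF f[unfolded frechet_derivative_works] g[unfolded frechet_derivative_works]] by simp
  then show ?thesis by (metis frechet_derivative_at)
qed

lemma Cn_add: "Cn n f \<Longrightarrow> Cn n g \<Longrightarrow> Cn n (\<lambda>x. f x + g x)"
proof (induction n arbitrary: f g)
  case 0 then show ?case by (simp add: Cn_0)
next
  case (Suc n)
  then have df: "\<forall>x. f differentiable (at x)" and dg: "\<forall>x. g differentiable (at x)" by (auto simp: Cn_Suc)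
  have "Dd (\<lambda>x. f x + g x) h = (\<lambda>x. Dd f h x + Dd g h x)" for h
    using fd_add df dg by blast
  then show ?case using Suc df dg by (simp add: Cn_Suc)
qed

lemma Cn_mult: "Cn n f \<Longrightarrow> Cn n g \<Longrightarrow> Cn n (\<lambda>x. f x * g x)"
proof (induction n arbitrary: f g)
  case 0 then show ?case by (simp add: Cn_0)
next
  case (Suc n)
  then have df: "\<forall>x. f differentiable (at x)" and dg: "\<forall>x. g differentiable (at x)" by (auto simp: Cn_Suc)
  have "Dd (\<lambda>x. f x * g x) h = (\<lambda>x. f x * Dd g h x + Dd f h x * g x)" for h
    using fd_mult df dg by blast
  moreover have "Cn n (\<lambda>x. f x * Dd g h x + Dd f h x * g x)" for h
    using Suc by (intro Cn_add Suc.IH) (auto simp: Cn_Suc intro: Cn_mono)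
  ultimately show ?case using df dg by (simp add: Cn_Suc)
qed

lemma Cn_poly: "real_polynomial_function f \<Longrightarrow> Cn n f"
  by (induction rule: real_polynomial_function.induct) (auto intro: Cn_linear Cn_const Cn_add Cn_mult)


lemma rpf_deriv: "real_polynomial_function (Q::real\<Rightarrow>real) \<Longrightarrow>
   \<exists>Q'. real_polynomial_function Q' \<and> (\<forall>y. (Q has_real_derivative Q' y) (at y))"
proof (induction rule: real_polynomial_function.induct)
  case (linear f)
  then interpret bounded_linear f .
  have "f y = f 1 * y" for y using scale[of y 1] by simp
  then have "(f has_real_derivative f 1) (at y)" for y
    by (metis (no_types) DERIV_cmult_Id ext mult.commute)
  then show ?case by (intro exI[of _ "\<lambda>_. f 1"]) auto
next
  case (const c) then show ?case by (intro exI[of _ "\<lambda>_. 0"]) auto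
next
  case (add f g)
  then obtain f' g' where "real_polynomial_function f'" "\<forall>y. (f has_real_derivative f' y) (at y)"
     "real_polynomial_function g'" "\<forall>y. (g has_real_derivative g' y) (at y)" by blast
  then show ?case by (intro exI[of _ "\<lambda>y. f' y + g' y"]) (auto intro!: derivative_eq_intros)
next
  case (mult f g)
  then obtain f' g' where "real_polynomial_function f'" "\<forall>y. (f has_real_derivative f' y) (at y)"
     "real_polynomial_function g'" "\<forall>y. (g has_real_derivative g' y) (at y)" by blast
  then show ?case using mult.hyps by (intro exI[of _ "\<lambda>y. f' y * g y + f y * g' y"])
     (auto intro!: derivative_eq_intros real_polynomial_function.intros(3) real_polynomial_function.intros(4))
qed

lemma rpf_growth: "real_polynomial_function (Q::real\<Rightarrow>real) \<Longrightarrow>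
   \<exists>C k. \<forall>y\<ge>0. \<bar>Q y\<bar> \<le> C * (1 + y) ^ k"
proof (induction rule: real_polynomial_function.induct)
  case (linear f)
  then interpret bounded_linear f .
  have "f y = f 1 * y" for y using scale[of y 1] by simp
  have "\<bar>f y\<bar> \<le> \<bar>f 1\<bar> * (1 + y) ^ 1" if "y \<ge> 0" for y
  proof -
    have "\<bar>f y\<bar> = \<bar>f 1\<bar> * \<bar>y\<bar>" using \<open>\<And>y. f y = f 1 * y\<close>[of y] by (simp add: abs_mult)
    also have "\<dots> \<le> \<bar>f 1\<bar> * (1 + y)" using that by (intro mult_left_mono) auto
    finally show ?thesis by simp
  qed
  then show ?case by (intro exI[of _ "\<bar>f 1\<bar>"] exI[of _ "1::nat"]) auto
next
  case (const c) then show ?case by (intro exI[of _ "\<bar>c\<bar>"] exI[of _ "0::nat"]) simp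
next
  case (add f g)
  then obtain C k D m where f: "\<forall>y\<ge>0. \<bar>f y\<bar> \<le> C * (1 + y) ^ k" and g: "\<forall>y\<ge>0. \<bar>g y\<bar> \<le> D * (1 + y) ^ m" by blast
  have "\<bar>f y + g y\<bar> \<le> (\<bar>C\<bar> + \<bar>D\<bar>) * (1 + y) ^ (k + m)" if y: "y \<ge> 0" for y
  proof -
    have 1: "(1 + y) ^ k \<le> (1 + y) ^ (k + m)" "(1 + y) ^ m \<le> (1 + y) ^ (k + m)"
      using y by (auto intro: power_increasing)
    have "C * (1 + y) ^ k \<le> \<bar>C\<bar> * (1 + y) ^ k"
      using y by (intro mult_right_mono) auto
    also have "\<dots> \<le> \<bar>C\<bar> * (1 + y) ^ (k + m)"
      using 1 by (intro mult_left_mono) auto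
    finally have a: "C * (1 + y) ^ k \<le> \<bar>C\<bar> * (1 + y) ^ (k + m)" .
    have "D * (1 + y) ^ m \<le> \<bar>D\<bar> * (1 + y) ^ m"
      using y by (intro mult_right_mono) auto
    also have "\<dots> \<le> \<bar>D\<bar> * (1 + y) ^ (k + m)"
      using 1 by (intro mult_left_mono) auto
    finally have b: "D * (1 + y) ^ m \<le> \<bar>D\<bar> * (1 + y) ^ (k + m)" .
    have "\<bar>f y + g y\<bar> \<le> \<bar>f y\<bar> + \<bar>g y\<bar>" by (rule abs_triangle_ineq)
    also have "\<dots> \<le> \<bar>C\<bar> * (1 + y) ^ (k + m) + \<bar>D\<bar> * (1 + y) ^ (k + m)"
      using f g y a b by (intro add_mono) fastforce+
    finally show ?thesis by (simp add: distrib_right)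
  qed
  then show ?case by (intro exI[of _ "\<bar>C\<bar> + \<bar>D\<bar>"] exI[of _ "k+m"]) simp
next
  case (mult f g)
  then obtain C k D m where f: "\<forall>y\<ge>0. \<bar>f y\<bar> \<le> C * (1 + y) ^ k" and g: "\<forall>y\<ge>0. \<bar>g y\<bar> \<le> D * (1 + y) ^ m" by blast
  have "\<bar>f y * g y\<bar> \<le> (C * D) * (1 + y) ^ (k + m)" if y: "y \<ge> 0" for y
  proof -
    have "\<bar>f y * g y\<bar> = \<bar>f y\<bar> * \<bar>g y\<bar>" by (simp add: abs_mult)
    also have "\<dots> \<le> (C * (1 + y) ^ k) * (D * (1 + y) ^ m)"
      using f g y by (intro mult_mono) auto
    finally show ?thesis by (simp add: power_add algebra_simps)
  qed
  then show ?case by (intro exI[of _ "C * D"] exI[of _ "k+m"]) simp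
qed

lemma rpf_exp_lim: "real_polynomial_function (Q::real\<Rightarrow>real) \<Longrightarrow>
   ((\<lambda>y. Q y / exp y) \<longlongrightarrow> 0) at_top"
proof -
  assume "real_polynomial_function Q"
  then obtain C k where b: "\<forall>y\<ge>0. \<bar>Q y\<bar> \<le> C * (1 + y) ^ k" using rpf_growth by blast
  have l1: "((\<lambda>y. (1 + y) ^ k / exp (1 + y)) \<longlongrightarrow> (0::real)) at_top"
    by (rule filterlim_compose[OF tendsto_power_div_exp_0[of k]])
       (rule filterlim_tendsto_add_at_top[OF tendsto_const filterlim_ident])
  have "((\<lambda>y. C * exp 1 * ((1 + y) ^ k / exp (1 + y))) \<longlongrightarrow> C * exp 1 * 0) at_top"
    by (intro tendsto_mult tendsto_const l1)
  then have l2: "((\<lambda>y. C * (1 + y) ^ k / exp y) \<longlongrightarrow> 0) at_top"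
    by (simp add: exp_add)
  show ?thesis
  proof (rule tendsto_0_le[OF l2, of _ 1])
    show "\<forall>\<^sub>F y in at_top. norm (Q y / exp y) \<le> norm (C * (1 + y) ^ k / exp y) * 1"
      using eventually_ge_at_top[of 0]
      by eventually_elim (use b in \<open>auto simp: divide_right_mono\<close>)
  qed
qed

definition dQ :: "(real \<Rightarrow> real) \<Rightarrow> real \<Rightarrow> real" where
  "dQ Q = (SOME Q'. real_polynomial_function Q' \<and> (\<forall>y. (Q has_real_derivative Q' y) (at y)))"

lemma dQ: assumes "real_polynomial_function Q" shows "real_polynomial_function (dQ Q) \<and> (\<forall>y. (Q has_real_derivative dQ Q y) (at y))"
proof -
  obtain Q' where "real_polynomial_function Q' \<and> (\<forall>y. (Q has_real_derivative Q' y) (at y))"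
    using rpf_deriv[OF assms] by blast
  then show ?thesis unfolding dQ_def
    by (rule someI[where P="\<lambda>Q'. real_polynomial_function Q' \<and> (\<forall>y. (Q has_real_derivative Q' y) (at y))"])
qed

definition nQ :: "(real \<Rightarrow> real) \<Rightarrow> real \<Rightarrow> real" where
  "nQ Q = (\<lambda>y. y * y * (Q y + (- 1) * dQ Q y))"

lemma nQ_rpf: "real_polynomial_function Q \<Longrightarrow> real_polynomial_function (nQ Q)"
proof -
  assume Q: "real_polynomial_function Q"
  have id: "real_polynomial_function (\<lambda>y::real. y)"
    by (rule real_polynomial_function.intros(1)) (rule bounded_linear_ident)
  have m: "real_polynomial_function (\<lambda>y. (- 1) * dQ Q y)"
    by (rule real_polynomial_function.intros(4)[OF real_polynomial_function.intros(2)]) (use dQ[OF Q] in blast)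
  have "real_polynomial_function (\<lambda>y. y * y * (Q y + (- 1) * dQ Q y))"
    by (rule real_polynomial_function.intros(4)[OF real_polynomial_function.intros(4)[OF id id]
          real_polynomial_function.intros(3)[OF Q m]])
  then show ?thesis unfolding nQ_def .
qed

definition GQ :: "(real \<Rightarrow> real) \<Rightarrow> real \<Rightarrow> real" where
  "GQ Q t = (if t > 0 then Q (1 / t) * exp (- (1 / t)) else 0)"


lemma GQ_deriv_pos:
  assumes Q: "real_polynomial_function Q" and t: "t > 0"
  shows "(GQ Q has_real_derivative GQ (nQ Q) t) (at t)"
proof -
  have Q': "\<And>y. (Q has_real_derivative dQ Q y) (at y)" using dQ[OF Q] by blast
  have d1: "((\<lambda>s. Q (1/s)) has_real_derivative dQ Q (1/t) * (- inverse (t^2))) (at t)"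
    by (rule DERIV_chain2[OF Q']) (use t in \<open>auto intro!: derivative_eq_intros simp: power2_eq_square field_simps\<close>)
  have d2: "((\<lambda>s. exp (- (1/s))) has_real_derivative exp (- (1/t)) * inverse (t^2)) (at t)"
    by (rule DERIV_chain2[OF DERIV_exp]) (use t in \<open>auto intro!: derivative_eq_intros simp: power2_eq_square field_simps\<close>)
  have d3: "((\<lambda>s. Q (1/s) * exp (- (1/s))) has_real_derivative
      dQ Q (1/t) * (- inverse (t^2)) * exp (- (1/t)) + exp (- (1/t)) * inverse (t^2) * Q (1/t)) (at t)"
    by (rule DERIV_mult[OF d1 d2])
  have eq: "dQ Q (1/t) * (- inverse (t^2)) * exp (- (1/t)) + exp (- (1/t)) * inverse (t^2) * Q (1/t)
       = GQ (nQ Q) t"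
    using t by (simp add: GQ_def nQ_def power2_eq_square field_simps)
  show ?thesis
    by (rule has_field_derivative_transform_within_open[OF d3[unfolded eq], of "{0<..}"])
       (use t in \<open>auto simp: GQ_def\<close>)
qed

lemma GQ_deriv_neg:
  assumes t: "t < 0"
  shows "(GQ Q has_real_derivative GQ (nQ Q) t) (at t)"
proof -
  have "((\<lambda>s. 0) has_real_derivative 0) (at t)" by simp
  moreover have "GQ (nQ Q) t = 0" using t by (simp add: GQ_def)
  moreover have "\<And>x. x \<in> {..<0} \<Longrightarrow> 0 = GQ Q x" by (auto simp: GQ_def)
  ultimately show ?thesis using t has_field_derivative_transform_within_open[of "\<lambda>s. 0" 0 t "{..<0}" "GQ Q"]
    by simp
qed

lemma GQ_deriv_0:
  assumes Q: "real_polynomial_function Q"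
  shows "(GQ Q has_real_derivative GQ (nQ Q) 0) (at 0)"
proof -
  have R: "real_polynomial_function (\<lambda>y. y * Q y)"
    by (rule real_polynomial_function.intros(4)[OF real_polynomial_function.intros(1)[OF bounded_linear_ident] Q])
  have lim: "((\<lambda>y. y * Q y / exp y) \<longlongrightarrow> 0) at_top" by (rule rpf_exp_lim[OF R])
  have right: "((\<lambda>s. (GQ Q s - GQ Q 0) / (s - 0)) \<longlongrightarrow> 0) (at_right 0)"
  proof -
    have "((\<lambda>s. inverse s * Q (inverse s) / exp (inverse s)) \<longlongrightarrow> 0) (at_right 0)"
      by (rule filterlim_compose[OF lim filterlim_inverse_at_top_right])
    moreover have "\<forall>\<^sub>F s in at_right 0. inverse s * Q (inverse s) / exp (inverse s) = (GQ Q s - GQ Q 0) / (s - 0)"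
      by (auto simp: eventually_at_right_less GQ_def exp_minus field_simps eventually_at_filter)
    ultimately show ?thesis by (simp add: tendsto_cong)
  qed
  have left: "((\<lambda>s. (GQ Q s - GQ Q 0) / (s - 0)) \<longlongrightarrow> 0) (at_left 0)"
  proof -
    have "\<forall>\<^sub>F s in at_left 0. 0 = (GQ Q s - GQ Q 0) / (s - 0)"
      by (auto simp: GQ_def eventually_at_filter)
    from tendsto_cong[OF this, of 0] show ?thesis by simp
  qed
  have "((\<lambda>s. (GQ Q s - GQ Q 0) / (s - 0)) \<longlongrightarrow> 0) (at 0)"
    using left right by (simp add: filterlim_at_split)
  then show ?thesis by (simp add: has_field_derivative_iff GQ_def)
qed

lemma GQ_deriv:
  assumes Q: "real_polynomial_function Q"
  shows "(GQ Q has_real_derivative GQ (nQ Q) t) (at t)"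
  using GQ_deriv_pos[OF Q] GQ_deriv_neg GQ_deriv_0[OF Q] by (cases t "0::real" rule: linorder_cases) auto


lemma GQ_comp_deriv:
  assumes Q: "real_polynomial_function Q" and r: "r differentiable (at x)"
  shows "((\<lambda>x. GQ Q (r x)) has_derivative (\<lambda>h. frechet_derivative r (at x) h * GQ (nQ Q) (r x))) (at x)"
proof -
  have "(r has_derivative frechet_derivative r (at x)) (at x)"
    using r by (simp add: frechet_derivative_works)
  from DERIV_compose_FDERIV[OF GQ_deriv[OF Q] this] show ?thesis .
qed

lemma Cn_GQ: assumes "real_polynomial_function Q" "Cn n r"
  shows "Cn n (\<lambda>x. GQ Q (r x))"
  using assms
proof (induction n arbitrary: Q)
  case 0
  have "(\<lambda>x. GQ Q (r x)) differentiable (at x)" for x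
  proof -
    have "r differentiable (at x)" using 0 by (simp add: Cn_0)
    from GQ_comp_deriv[OF 0(1) this] show ?thesis by (rule differentiableI)
  qed
  then show ?case by (simp add: Cn_0)
next
  case (Suc n)
  have dr: "\<And>x. r differentiable (at x)" and Dr: "\<And>h. Cn n (Dd r h)" using Suc.prems by (auto simp: Cn_Suc)
  note hd = GQ_comp_deriv[OF Suc.prems(1) dr]
  have "Dd (\<lambda>x. GQ Q (r x)) h = (\<lambda>x. GQ (nQ Q) (r x) * Dd r h x)" for h
  proof
    fix x show "frechet_derivative (\<lambda>x. GQ Q (r x)) (at x) h = GQ (nQ Q) (r x) * Dd r h x"
      using fun_cong[OF frechet_derivative_at[OF hd[of x]], of h] by (simp add: mult.commute)
  qed
  moreover have "Cn n (\<lambda>x. GQ (nQ Q) (r x) * Dd r h x)" for h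
    by (rule Cn_mult[OF Suc.IH[OF nQ_rpf[OF Suc.prems(1)] Cn_mono[OF Suc.prems(2)]] Dr])
  moreover have "\<forall>x. (\<lambda>x. GQ Q (r x)) differentiable (at x)"
    using hd by (blast intro: differentiableI)
  ultimately show ?case by (simp add: Cn_Suc)
qed

lemma Cn_quad: "Cn n (\<lambda>x::'a::euclidean_space. c - x \<bullet> x)"
proof -
  have hd: "((\<lambda>x::'a. c - x \<bullet> x) has_derivative (\<lambda>h. - (2 * (x \<bullet> h)))) (at x)" for x
    by (auto intro!: derivative_eq_intros simp: inner_commute)
  show ?thesis
  proof (cases n)
    case 0 then show ?thesis using hd by (auto simp: Cn_0 differentiable_def)
  next
    case (Suc m)
    have "Dd (\<lambda>x::'a. c - x \<bullet> x) h = (\<lambda>x. - (2 * (x \<bullet> h)))" for h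
      using hd by (intro ext) (metis frechet_derivative_at)
    moreover have "bounded_linear (\<lambda>x::'a. - (2 * (x \<bullet> h)))" for h
      by (intro bounded_linear_minus bounded_linear_const_mult bounded_linear_inner_left)
    ultimately show ?thesis using Suc hd by (auto simp: Cn_Suc differentiable_def intro: Cn_linear)
  qed
qed

definition bump :: "real \<Rightarrow> 'a::euclidean_space \<Rightarrow> real" where
  "bump R x = GQ (\<lambda>_. 1) (R^2 - x \<bullet> x)"

lemma rpf_one: "real_polynomial_function (\<lambda>_::real. 1::real)"
  by (rule real_polynomial_function.intros(2))

lemma bump_Cn: "Cn n (bump R)"
  unfolding bump_def by (rule Cn_GQ[OF rpf_one Cn_quad])

lemma poly_bump_smooth: "real_polynomial_function P \<Longrightarrow> smooth_fun (\<lambda>x. P x * bump R x)"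
  unfolding smooth_Cn by (auto intro: Cn_mult Cn_poly bump_Cn)

lemma bump_zero: "R \<ge> 0 \<Longrightarrow> R < norm x \<Longrightarrow> bump R x = 0"
proof -
  assume "R \<ge> 0" "R < norm x"
  then have "R^2 < (norm x)^2" by (intro power_strict_mono) auto
  then show "bump R x = 0" by (simp add: bump_def GQ_def power2_norm_eq_inner)
qed

lemma bump_pos: "norm x < R \<Longrightarrow> bump R x > 0"
proof -
  assume "norm x < R"
  then have "(norm x)^2 < R^2" by (intro power_strict_mono) auto
  then show "bump R x > 0" by (simp add: bump_def GQ_def power2_norm_eq_inner)
qed

lemma bump_bounds: "0 \<le> bump R x" "bump R x \<le> 1"
  by (auto simp: bump_def GQ_def)

lemma poly_bump_test: "real_polynomial_function P \<Longrightarrow> R \<ge> 0 \<Longrightarrow> test_fun (\<lambda>x. P x * bump R x)"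
  unfolding test_fun_def using poly_bump_smooth bump_zero by fastforce

lemma smooth_cont: "smooth_fun f \<Longrightarrow> continuous_on UNIV f"
  unfolding smooth_Cn using Cn_0 differentiable_imp_continuous_on differentiable_on_def
  by (metis differentiable_at_withinI)

lemma bump_cont: "continuous_on UNIV (bump R)"
  using bump_Cn[of 0 R] Cn_0 differentiable_imp_continuous_on differentiable_on_def
  by (metis differentiable_at_withinI)


lemma cont_meas: "continuous_on UNIV (f::'a::euclidean_space \<Rightarrow> real) \<Longrightarrow> f \<in> borel_measurable lborel"
  using borel_measurable_continuous_onI by (simp add: measurable_lborel1)

lemma integrable_mult_cont:
  fixes w g :: "'a::euclidean_space \<Rightarrow> real"
  assumes w: "integrable lborel w" and supp: "\<And>x. x \<notin> cball 0 R \<Longrightarrow> w x = 0"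
    and g: "continuous_on UNIV g"
  shows "integrable lborel (\<lambda>x. w x * g x)"
proof -
  have "compact (g ` cball 0 R)"
    by (rule compact_continuous_image[OF continuous_on_subset[OF g] compact_cball]) auto
  then obtain B where B: "\<And>x. x \<in> cball 0 R \<Longrightarrow> \<bar>g x\<bar> \<le> B"
    using compact_imp_bounded bounded_iff by (metis imageI real_norm_def)
  show ?thesis
  proof (rule Bochner_Integration.integrable_bound[where f="\<lambda>x. B * w x"])
    show "integrable lborel (\<lambda>x. B * w x)" using w by simp
    show "(\<lambda>x. w x * g x) \<in> borel_measurable lborel"
      using borel_measurable_integrable[OF w] cont_meas[OF g] by measurable
    show "AE x in lborel. norm (w x * g x) \<le> norm (B * w x)"
    proof (rule AE_I2)
      fix x show "norm (w x * g x) \<le> norm (B * w x)"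
      proof (cases "x \<in> cball 0 R")
        case True
        then have "\<bar>g x\<bar> \<le> \<bar>B\<bar>" using B by fastforce
        then show ?thesis by (simp add: abs_mult mult_left_mono mult.commute[of "\<bar>B\<bar>"])
      next
        case False then show ?thesis using supp by simp
      qed
    qed
  qed
qed

lemma integrable_bump_mult:
  fixes k :: "'a::euclidean_space \<Rightarrow> real"
  assumes k: "k \<in> borel_measurable lborel" and loc: "set_integrable lborel (cball 0 R) k" and R: "R \<ge> 0"
  shows "integrable lborel (\<lambda>x. k x * bump R x)"
proof (rule Bochner_Integration.integrable_bound[where f="\<lambda>x. indicator (cball 0 R) x *\<^sub>R k x"])
  show "integrable lborel (\<lambda>x. indicator (cball 0 R) x *\<^sub>R k x)"
    using loc by (simp add: set_integrable_def)
  show "(\<lambda>x. k x * bump R x) \<in> borel_measurable lborel"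
    using k cont_meas[OF bump_cont] by measurable
  show "AE x in lborel. norm (k x * bump R x) \<le> norm (indicator (cball 0 R) x *\<^sub>R k x)"
  proof (rule AE_I2)
    fix x show "norm (k x * bump R x) \<le> norm (indicator (cball 0 R) x *\<^sub>R k x)"
    proof (cases "x \<in> cball 0 R")
      case True
      then show ?thesis using bump_bounds[of R x]
        by (simp add: abs_mult mult_left_le)
    next
      case False then have "R < norm x" by simp
      then show ?thesis using bump_zero[OF R, of x] by simp
    qed
  qed
qed

lemma orth_cont:
  fixes k :: "'a::euclidean_space \<Rightarrow> real"
  assumes k: "k \<in> borel_measurable lborel" and loc: "set_integrable lborel (cball 0 R) k" and R: "R \<ge> 0"
    and orth: "\<And>\<phi>. test_fun \<phi> \<Longrightarrow> (\<integral>x. k x * \<phi> x \<partial>lborel) = 0"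
    and f: "continuous_on UNIV f"
  shows "(\<integral>x. k x * bump R x * f x \<partial>lborel) = 0"
proof -
  define w where "w = (\<lambda>x. k x * bump R x)"
  have w: "integrable lborel w" unfolding w_def by (rule integrable_bump_mult[OF k loc R])
  have supp: "w x = 0" if "x \<notin> cball 0 R" for x
  proof -
    have "R < norm x" using that by simp
    then show ?thesis by (simp add: w_def bump_zero[OF R])
  qed
  have aw: "integrable lborel (\<lambda>x. \<bar>w x\<bar>)" using w by simp
  have "\<bar>\<integral>x. w x * f x \<partial>lborel\<bar> \<le> e * (\<integral>x. \<bar>w x\<bar> \<partial>lborel)" if e: "e > 0" for e
  proof -
    obtain P where P: "polynomial_function P" and Pf: "\<forall>x\<in>cball 0 R. norm (f x - P x) < e"
      using Stone_Weierstrass_polynomial_function[OF compact_cball continuous_on_subset[OF f] e] by blast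
    have rP: "real_polynomial_function P" using P by (simp add: real_polynomial_function_eq)
    have Pc: "continuous_on UNIV P" using P by (simp add: continuous_on_polymonial_function)
    have "(\<integral>x. k x * (P x * bump R x) \<partial>lborel) = 0" by (rule orth[OF poly_bump_test[OF rP R]])
    then have wP: "(\<integral>x. w x * P x \<partial>lborel) = 0" unfolding w_def by (simp add: ac_simps)
    have i1: "integrable lborel (\<lambda>x. w x * f x)" by (rule integrable_mult_cont[OF w supp f])
    have i2: "integrable lborel (\<lambda>x. w x * P x)" by (rule integrable_mult_cont[OF w supp Pc])
    have "(\<integral>x. w x * f x \<partial>lborel) = (\<integral>x. w x * f x \<partial>lborel) - (\<integral>x. w x * P x \<partial>lborel)"
      using wP by simp
    also have "\<dots> = (\<integral>x. w x * (f x - P x) \<partial>lborel)"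
      using i1 i2 by (simp add: right_diff_distrib)
    finally have eq: "(\<integral>x. w x * f x \<partial>lborel) = (\<integral>x. w x * (f x - P x) \<partial>lborel)" .
    have "\<bar>\<integral>x. w x * (f x - P x) \<partial>lborel\<bar> \<le> (\<integral>x. \<bar>w x * (f x - P x)\<bar> \<partial>lborel)"
      by (rule integral_abs_bound)
    also have "\<dots> \<le> (\<integral>x. e * \<bar>w x\<bar> \<partial>lborel)"
    proof (rule integral_mono)
      show "integrable lborel (\<lambda>x. \<bar>w x * (f x - P x)\<bar>)"
        using i1 i2 by (simp add: right_diff_distrib)
      show "integrable lborel (\<lambda>x. e * \<bar>w x\<bar>)" using aw by simp
      fix x show "\<bar>w x * (f x - P x)\<bar> \<le> e * \<bar>w x\<bar>"
      proof (cases "x \<in> cball 0 R")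
        case True
        then have "\<bar>f x - P x\<bar> \<le> e" using Pf by fastforce
        then show ?thesis by (simp add: abs_mult mult_left_mono mult.commute[of e])
      next
        case False then show ?thesis using supp e by simp
      qed
    qed
    also have "\<dots> = e * (\<integral>x. \<bar>w x\<bar> \<partial>lborel)" by simp
    finally show ?thesis using eq by simp
  qed
  then have "\<bar>\<integral>x. w x * f x \<partial>lborel\<bar> \<le> 0"
  proof -
    assume H: "\<And>e. e > 0 \<Longrightarrow> \<bar>\<integral>x. w x * f x \<partial>lborel\<bar> \<le> e * (\<integral>x. \<bar>w x\<bar> \<partial>lborel)"
    define J where "J = (\<integral>x. \<bar>w x\<bar> \<partial>lborel)"
    have J0: "J \<ge> 0" unfolding J_def by simp
    show ?thesis
    proof (rule field_le_epsilon)
      fix e :: real assume e: "e > 0"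
      have "\<bar>\<integral>x. w x * f x \<partial>lborel\<bar> \<le> (e / (J + 1)) * J" using H[of "e / (J+1)"] e J0 unfolding J_def by simp
      also have "\<dots> \<le> e" using e J0 by (simp add: field_simps)
      finally show "\<bar>\<integral>x. w x * f x \<partial>lborel\<bar> \<le> 0 + e" by simp
    qed
  qed
  then show ?thesis unfolding w_def by simp
qed


lemma closed_orth:
  fixes w :: "'a::euclidean_space \<Rightarrow> real"
  assumes w: "integrable lborel w"
    and orth: "\<And>f. continuous_on UNIV f \<Longrightarrow> (\<integral>x. w x * f x \<partial>lborel) = 0"
    and C: "closed C"
  shows "(\<integral>x. w x * indicator C x \<partial>lborel) = 0"
proof (cases "C = {}")
  case True then show ?thesis by simp
next
  case False
  define g where "g = (\<lambda>(n::nat) x. max 0 (1 - real n * infdist x C))"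
  define s where "s = (\<lambda>(n::nat) x. w x * g n x)"
  have cont: "continuous_on UNIV (g n)" for n
    unfolding g_def by (intro continuous_on_max continuous_on_const continuous_on_diff continuous_on_mult
        continuous_on_infdist continuous_on_id)
  have wm: "w \<in> borel_measurable lborel" using w by simp
  have Cm[measurable]: "C \<in> sets borel" using C by (rule borel_closed)
  have "(\<lambda>n. integral\<^sup>L lborel (s n)) \<longlonglongrightarrow> (\<integral>x. w x * indicator C x \<partial>lborel)"
  proof (rule integral_dominated_convergence[where w="\<lambda>x. \<bar>w x\<bar>"])
    show "(\<lambda>x. w x * indicator C x) \<in> borel_measurable lborel"
      using wm C by measurable
    show "s n \<in> borel_measurable lborel" for n
      unfolding s_def by (rule borel_measurable_times[OF wm cont_meas[OF cont[of n]]])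
    show "integrable lborel (\<lambda>x. \<bar>w x\<bar>)" using w by simp
    show "AE x in lborel. (\<lambda>n. s n x) \<longlonglongrightarrow> w x * indicator C x"
    proof (rule AE_I2)
      fix x
      show "(\<lambda>n. s n x) \<longlonglongrightarrow> w x * indicator C x"
      proof (cases "x \<in> C")
        case True
        then have "infdist x C = 0" by (simp add: infdist_zero)
        then show ?thesis using True by (simp add: s_def g_def)
      next
        case nC: False
        then have d: "infdist x C > 0" using infdist_pos_not_in_closed[OF C] False by blast
        obtain N :: nat where N: "N > 1 / infdist x C" using reals_Archimedean2 by blast
        have "eventually (\<lambda>n. s n x = 0) sequentially"
        proof (rule eventually_sequentiallyI[of N])
          fix n assume "N \<le> n"
          then have "real n > 1 / infdist x C" using N by linarith
          then have "real n * infdist x C > 1" using d by (simp add: field_simps)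
          then show "s n x = 0" by (simp add: s_def g_def)
        qed
        then have "(\<lambda>n. s n x) \<longlonglongrightarrow> 0" by (rule tendsto_eventually)
        then show ?thesis using nC by simp
      qed
    qed
    show "AE x in lborel. norm (s n x) \<le> \<bar>w x\<bar>" for n
    proof (rule AE_I2)
      fix x
      have "g n x \<le> 1" "g n x \<ge> 0" using infdist_nonneg[of x C] by (simp_all add: g_def)
      then have "\<bar>w x\<bar> * \<bar>g n x\<bar> \<le> \<bar>w x\<bar> * 1" by (intro mult_left_mono) auto
      then show "norm (s n x) \<le> \<bar>w x\<bar>" unfolding s_def by (simp add: abs_mult)
    qed
  qed
  moreover have "(\<lambda>n. integral\<^sup>L lborel (s n)) = (\<lambda>n. 0)"
    unfolding s_def by (intro ext orth[OF cont])
  ultimately have "(\<lambda>n. 0::real) \<longlonglongrightarrow> (\<integral>x. w x * indicator C x \<partial>lborel)" by simp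
  then show ?thesis by (rule LIMSEQ_unique[OF tendsto_const, symmetric])
qed

lemma orth_AE_zero:
  fixes w :: "'a::euclidean_space \<Rightarrow> real"
  assumes w: "integrable lborel w"
    and orth: "\<And>f. continuous_on UNIV f \<Longrightarrow> (\<integral>x. w x * f x \<partial>lborel) = 0"
  shows "AE x in lborel. w x = 0"
proof -
  have wm[measurable]: "w \<in> borel_measurable lborel" using w by simp
  define f1 where "f1 = (\<lambda>x. ennreal (max 0 (w x)))"
  define f2 where "f2 = (\<lambda>x. ennreal (max 0 (- w x)))"
  have f1m[measurable]: "f1 \<in> borel_measurable lborel" unfolding f1_def by measurable
  have f2m[measurable]: "f2 \<in> borel_measurable lborel" unfolding f2_def by measurable
  have ip: "integrable lborel (\<lambda>x. max 0 (w x) * indicator A x)" if [measurable]: "A \<in> sets lborel" for A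
    by (rule Bochner_Integration.integrable_bound[where f=w]) (use w in \<open>auto simp: indicator_def\<close>)
  have in': "integrable lborel (\<lambda>x. max 0 (- w x) * indicator A x)" if [measurable]: "A \<in> sets lborel" for A
    by (rule Bochner_Integration.integrable_bound[where f=w]) (use w in \<open>auto simp: indicator_def\<close>)
  have em1: "emeasure (density lborel f1) A = ennreal (\<integral>x. max 0 (w x) * indicator A x \<partial>lborel)"
    if A: "A \<in> sets lborel" for A
  proof -
    have "emeasure (density lborel f1) A = (\<integral>\<^sup>+ x. f1 x * indicator A x \<partial>lborel)"
      using A by (simp add: emeasure_density)
    also have "\<dots> = (\<integral>\<^sup>+ x. ennreal (max 0 (w x) * indicator A x) \<partial>lborel)"
      unfolding f1_def by (intro nn_integral_cong) (simp add: indicator_def)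
    also have "\<dots> = ennreal (\<integral>x. max 0 (w x) * indicator A x \<partial>lborel)"
      by (rule nn_integral_eq_integral[OF ip[OF A]]) simp
    finally show ?thesis .
  qed
  have em2: "emeasure (density lborel f2) A = ennreal (\<integral>x. max 0 (- w x) * indicator A x \<partial>lborel)"
    if A: "A \<in> sets lborel" for A
  proof -
    have "emeasure (density lborel f2) A = (\<integral>\<^sup>+ x. f2 x * indicator A x \<partial>lborel)"
      using A by (simp add: emeasure_density)
    also have "\<dots> = (\<integral>\<^sup>+ x. ennreal (max 0 (- w x) * indicator A x) \<partial>lborel)"
      unfolding f2_def by (intro nn_integral_cong) (simp add: indicator_def)
    also have "\<dots> = ennreal (\<integral>x. max 0 (- w x) * indicator A x \<partial>lborel)"
      by (rule nn_integral_eq_integral[OF in'[OF A]]) simp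
    finally show ?thesis .
  qed
  have sets_eq: "sets lborel = sigma_sets (UNIV::'a set) (Collect closed)"
    by (simp add: borel_eq_closed)
  have "density lborel f1 = density lborel f2"
  proof (rule measure_eqI_generator_eq[where E="Collect closed" and \<Omega>=UNIV and A="\<lambda>_. UNIV"])
    show "Int_stable (Collect closed :: 'a set set)" by (auto simp: Int_stable_def)
    show "Collect closed \<subseteq> Pow (UNIV::'a set)" by simp
    show "sets (density lborel f1) = sigma_sets UNIV (Collect closed)" using sets_eq by simp
    show "sets (density lborel f2) = sigma_sets UNIV (Collect closed)" using sets_eq by simp
    show "range (\<lambda>_. UNIV) \<subseteq> Collect (closed :: 'a set \<Rightarrow> bool)" by auto
    show "(\<Union>i::nat. UNIV) = (UNIV :: 'a set)" by simp
    show "emeasure (density lborel f1) UNIV \<noteq> \<infinity>" for i :: nat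
      using em1[of UNIV] by simp
    fix X :: "'a set" assume "X \<in> Collect closed"
    then have X: "closed X" by simp
    then have Xs: "X \<in> sets lborel" by simp
    have "(\<integral>x. w x * indicator X x \<partial>lborel) = 0" by (rule closed_orth[OF w orth X])
    moreover have "(\<integral>x. w x * indicator X x \<partial>lborel)
       = (\<integral>x. max 0 (w x) * indicator X x \<partial>lborel) - (\<integral>x. max 0 (- w x) * indicator X x \<partial>lborel)"
    proof -
      have "(\<lambda>x. w x * indicator X x) = (\<lambda>x. max 0 (w x) * indicator X x - max 0 (- w x) * indicator X x)"
        by (auto simp: indicator_def max_def)
      then show ?thesis using ip[OF Xs] in'[OF Xs] by simp
    qed
    ultimately show "emeasure (density lborel f1) X = emeasure (density lborel f2) X"
      using em1[OF Xs] em2[OF Xs] by simp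
  qed
  then have "AE x in lborel. f1 x = f2 x"
    by (rule sigma_finite_measure.density_unique[OF sigma_finite_lborel f1m f2m])
  then show ?thesis
  proof (rule AE_mp[OF _ AE_I2], intro impI)
    fix x assume "f1 x = f2 x"
    then have "max 0 (w x) = max 0 (- w x)" unfolding f1_def f2_def by (simp add: ennreal_inj)
    then show "w x = 0" by (auto simp: max_def split: if_splits)
  qed
qed


lemma DBR:
  fixes k :: "'a::euclidean_space \<Rightarrow> real"
  assumes k: "k \<in> borel_measurable lborel" and loc: "\<And>r. set_integrable lborel (cball 0 r) k"
    and orth: "\<And>\<phi>. test_fun \<phi> \<Longrightarrow> (\<integral>x. k x * \<phi> x \<partial>lborel) = 0"
  shows "AE x in lborel. k x = 0"
proof -
  have A: "AE x in lborel. k x * bump (real n) x = 0" for n :: nat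
  proof (rule orth_AE_zero)
    show "integrable lborel (\<lambda>x. k x * bump (real n) x)"
      by (rule integrable_bump_mult[OF k loc]) simp
    fix f :: "'a \<Rightarrow> real" assume "continuous_on UNIV f"
    then show "(\<integral>x. k x * bump (real n) x * f x \<partial>lborel) = 0"
      by (intro orth_cont[OF k loc _ orth]) auto
  qed
  have "AE x in lborel. \<forall>n::nat. k x * bump (real n) x = 0"
    by (rule AE_all_countable[THEN iffD2]) (use A in blast)
  then show ?thesis
  proof (rule AE_mp[OF _ AE_I2], intro impI)
    fix x assume H: "\<forall>n::nat. k x * bump (real n) x = 0"
    obtain n :: nat where "norm x < real n" using reals_Archimedean2 by blast
    then have "bump (real n) x > 0" by (rule bump_pos)
    with H show "k x = 0" by auto
  qed
qed

lemma test_fun_props: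
  assumes "test_fun \<phi>"
  shows "continuous_on UNIV \<phi>" "\<exists>R\<ge>0. \<forall>x. x \<notin> cball 0 R \<longrightarrow> \<phi> x = 0"
proof -
  show "continuous_on UNIV \<phi>" using assms smooth_cont unfolding test_fun_def by blast
  obtain R where R: "\<forall>x. R < norm x \<longrightarrow> \<phi> x = 0" using assms unfolding test_fun_def by blast
  then have "\<forall>x. x \<notin> cball 0 (max R 0) \<longrightarrow> \<phi> x = 0" by auto
  then show "\<exists>R\<ge>0. \<forall>x. x \<notin> cball 0 R \<longrightarrow> \<phi> x = 0" by (intro exI[of _ "max R 0"]) auto
qed

lemma grad_comp_test_integrable:
  fixes g :: "'a::euclidean_space \<Rightarrow> 'a"
  assumes gm: "g \<in> borel_measurable lborel" and loc: "\<And>r. set_integrable lborel (cball 0 r) (\<lambda>x. norm (g x))"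
    and t: "test_fun \<phi>"
  shows "integrable lborel (\<lambda>x. (g x \<bullet> i) * \<phi> x)"
proof -
  obtain R where R: "R \<ge> 0" "\<And>x. x \<notin> cball 0 R \<Longrightarrow> \<phi> x = 0" using test_fun_props(2)[OF t] by blast
  define w where "w = (\<lambda>x. indicator (cball 0 R) x * (g x \<bullet> i))"
  have [measurable]: "g \<in> borel_measurable lborel" by (rule gm)
  have [measurable]: "cball 0 R \<in> sets borel" by (rule borel_closed[OF closed_cball])
  have w: "integrable lborel w"
  proof (rule Bochner_Integration.integrable_bound[where f="\<lambda>x. indicator (cball 0 R) x *\<^sub>R (norm i * norm (g x))"])
    show "integrable lborel (\<lambda>x. indicator (cball 0 R) x *\<^sub>R (norm i * norm (g x)))"
      using loc[of R] unfolding set_integrable_def by (simp add: mult.left_commute[of _ "norm i"])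
    show "w \<in> borel_measurable lborel" unfolding w_def using gm by measurable
    show "AE x in lborel. norm (w x) \<le> norm (indicator (cball 0 R) x *\<^sub>R (norm i * norm (g x)))"
      using Cauchy_Schwarz_ineq2[of "g _" i] by (intro AE_I2) (auto simp: w_def indicator_def mult.commute)
  qed
  have "integrable lborel (\<lambda>x. w x * \<phi> x)"
    by (rule integrable_mult_cont[where R=R, OF w _ test_fun_props(1)[OF t]]) (simp add: w_def)
  moreover have "(\<lambda>x. w x * \<phi> x) = (\<lambda>x. (g x \<bullet> i) * \<phi> x)"
  proof
    fix x show "w x * \<phi> x = (g x \<bullet> i) * \<phi> x"
      using R(2)[of x] by (cases "x \<in> cball 0 R") (auto simp: w_def)
  qed
  ultimately show ?thesis by simp
qed

lemma weak_grad_unique: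
  fixes u :: "'a::euclidean_space \<Rightarrow> real"
  assumes g1: "weak_grad u g1" and g2: "weak_grad u g2"
  shows "AE x in lborel. g1 x = g2 x"
proof -
  have g1m: "g1 \<in> borel_measurable lborel" and g2m: "g2 \<in> borel_measurable lborel"
    and l1: "\<And>r. set_integrable lborel (cball 0 r) (\<lambda>x. norm (g1 x))"
    and l2: "\<And>r. set_integrable lborel (cball 0 r) (\<lambda>x. norm (g2 x))"
    using g1 g2 unfolding weak_grad_def by auto
  have comp: "AE x in lborel. (g1 x - g2 x) \<bullet> i = 0" if i: "i \<in> Basis" for i
  proof (rule DBR)
    show "(\<lambda>x. (g1 x - g2 x) \<bullet> i) \<in> borel_measurable lborel" using g1m g2m by measurable
    fix r :: real
    show "set_integrable lborel (cball 0 r) (\<lambda>x. (g1 x - g2 x) \<bullet> i)"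
      unfolding set_integrable_def
    proof (rule Bochner_Integration.integrable_bound[where f="\<lambda>x. indicator (cball 0 r) x *\<^sub>R (norm (g1 x) + norm (g2 x))"])
      show "integrable lborel (\<lambda>x. indicator (cball 0 r) x *\<^sub>R (norm (g1 x) + norm (g2 x)))"
        using set_integral_add(1)[OF l1 l2] unfolding set_integrable_def .
      have [measurable]: "cball 0 r \<in> sets borel" by (rule borel_closed[OF closed_cball])
      show "(\<lambda>x. indicator (cball 0 r) x *\<^sub>R ((g1 x - g2 x) \<bullet> i)) \<in> borel_measurable lborel"
        using g1m g2m by measurable
      have "\<bar>(g1 x - g2 x) \<bullet> i\<bar> \<le> norm (g1 x) + norm (g2 x)" for x
      proof -
        have "\<bar>(g1 x - g2 x) \<bullet> i\<bar> \<le> norm (g1 x - g2 x)" using i by (rule Basis_le_norm)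
        also have "\<dots> \<le> norm (g1 x) + norm (g2 x)" by (rule norm_triangle_ineq4)
        finally show ?thesis .
      qed
      then show "AE x in lborel. norm (indicator (cball 0 r) x *\<^sub>R ((g1 x - g2 x) \<bullet> i))
          \<le> norm (indicator (cball 0 r) x *\<^sub>R (norm (g1 x) + norm (g2 x)))"
        by (intro AE_I2) (auto simp: indicator_def)
    qed
  next
    fix \<phi> :: "'a \<Rightarrow> real" assume t: "test_fun \<phi>"
    have e1: "(\<integral>x. u x * frechet_derivative \<phi> (at x) i \<partial>lborel) = - (\<integral>x. (g1 x \<bullet> i) * \<phi> x \<partial>lborel)"
      using g1 t i unfolding weak_grad_def by blast
    have e2: "(\<integral>x. u x * frechet_derivative \<phi> (at x) i \<partial>lborel) = - (\<integral>x. (g2 x \<bullet> i) * \<phi> x \<partial>lborel)"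
      using g2 t i unfolding weak_grad_def by blast
    have i1: "integrable lborel (\<lambda>x. (g1 x \<bullet> i) * \<phi> x)" by (rule grad_comp_test_integrable[OF g1m l1 t])
    have i2: "integrable lborel (\<lambda>x. (g2 x \<bullet> i) * \<phi> x)" by (rule grad_comp_test_integrable[OF g2m l2 t])
    have "(\<integral>x. (g1 x - g2 x) \<bullet> i * \<phi> x \<partial>lborel) = (\<integral>x. (g1 x \<bullet> i) * \<phi> x - (g2 x \<bullet> i) * \<phi> x \<partial>lborel)"
      by (simp add: inner_diff_left left_diff_distrib)
    also have "\<dots> = (\<integral>x. (g1 x \<bullet> i) * \<phi> x \<partial>lborel) - (\<integral>x. (g2 x \<bullet> i) * \<phi> x \<partial>lborel)"
      by (rule Bochner_Integration.integral_diff[OF i1 i2])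
    also have "\<dots> = 0" using e1 e2 by simp
    finally show "(\<integral>x. (g1 x - g2 x) \<bullet> i * \<phi> x \<partial>lborel) = 0" .
  qed
  have "AE x in lborel. \<forall>i\<in>Basis. (g1 x - g2 x) \<bullet> i = 0"
    using comp by (subst AE_ball_countable) (auto intro: countable_finite)
  then show ?thesis
  proof (rule AE_mp[OF _ AE_I2], intro impI)
    fix x assume "\<forall>i\<in>Basis. (g1 x - g2 x) \<bullet> i = 0"
    then have "g1 x - g2 x = 0" by (simp add: euclidean_all_zero_iff)
    then show "g1 x = g2 x" by simp
  qed
qed


lemma weak_grad_scale:
  fixes u :: "'a::euclidean_space \<Rightarrow> real"
  assumes "weak_grad u g"
  shows "weak_grad (\<lambda>x. c * u x) (\<lambda>x. c *\<^sub>R g x)"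
proof -
  have um[measurable]: "u \<in> borel_measurable lborel" and gm[measurable]: "g \<in> borel_measurable lborel"
    and li: "\<And>r. set_integrable lborel (cball 0 r) u"
    and lg: "\<And>r. set_integrable lborel (cball 0 r) (\<lambda>x. norm (g x))"
    and id: "\<And>\<phi> i. test_fun \<phi> \<Longrightarrow> i \<in> Basis \<Longrightarrow>
        (\<integral>x. u x * frechet_derivative \<phi> (at x) i \<partial>lborel) = - (\<integral>x. (g x \<bullet> i) * \<phi> x \<partial>lborel)"
    using assms unfolding weak_grad_def by auto
  show ?thesis
    unfolding weak_grad_def
  proof (intro conjI allI impI)
    show "(\<lambda>x. c * u x) \<in> borel_measurable lborel" by measurable
    show "(\<lambda>x. c *\<^sub>R g x) \<in> borel_measurable lborel" by measurable
    fix r :: real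
    show "set_integrable lborel (cball 0 r) (\<lambda>x. c * u x)" using li[of r] by auto
    have "set_integrable lborel (cball 0 r) (\<lambda>x. \<bar>c\<bar> * norm (g x))" using lg[of r] by auto
    then show "set_integrable lborel (cball 0 r) (\<lambda>x. norm (c *\<^sub>R g x))" by simp
  next
    fix \<phi> :: "'a \<Rightarrow> real" and i :: 'a assume t: "test_fun \<phi>" and i: "i \<in> Basis"
    have "(\<integral>x. c * u x * frechet_derivative \<phi> (at x) i \<partial>lborel)
        = c * (\<integral>x. u x * frechet_derivative \<phi> (at x) i \<partial>lborel)"
      by (simp add: mult.assoc)
    also have "\<dots> = - (c * (\<integral>x. (g x \<bullet> i) * \<phi> x \<partial>lborel))" using id[OF t i] by simp
    also have "\<dots> = - (\<integral>x. ((c *\<^sub>R g x) \<bullet> i) * \<phi> x \<partial>lborel)"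
      by (simp add: mult.assoc)
    finally show "(\<integral>x. c * u x * frechet_derivative \<phi> (at x) i \<partial>lborel)
        = - (\<integral>x. ((c *\<^sub>R g x) \<bullet> i) * \<phi> x \<partial>lborel)" .
  qed
qed

lemma lp_mem_scale:
  fixes u :: "'a::euclidean_space \<Rightarrow> real"
  assumes "lp_mem h u" and h: "\<And>x. 0 \<le> h x" "\<And>x. h x \<le> H" and hm: "h \<in> borel_measurable lborel"
  shows "lp_mem h (\<lambda>x. c * u x)"
proof -
  have um[measurable]: "u \<in> borel_measurable lborel" and fin: "(\<integral>\<^sup>+ x. ennreal (\<bar>u x\<bar> powr h x) \<partial>lborel) < \<infinity>"
    using assms unfolding lp_mem_def by auto
  have [measurable]: "h \<in> borel_measurable lborel" by (rule hm)
  define B where "B = max 1 \<bar>c\<bar> powr H"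
  have B0: "B \<ge> 0" unfolding B_def by simp
  have pt: "\<bar>c * u x\<bar> powr h x \<le> B * \<bar>u x\<bar> powr h x" for x
  proof -
    have "\<bar>c * u x\<bar> powr h x = \<bar>c\<bar> powr h x * \<bar>u x\<bar> powr h x" by (simp add: abs_mult powr_mult)
    also have "\<dots> \<le> B * \<bar>u x\<bar> powr h x"
    proof (rule mult_right_mono)
      have "\<bar>c\<bar> powr h x \<le> max 1 \<bar>c\<bar> powr h x" using h(1)[of x] by (intro powr_mono2) auto
      also have "\<dots> \<le> max 1 \<bar>c\<bar> powr H" using h(2)[of x] by (intro powr_mono) auto
      finally show "\<bar>c\<bar> powr h x \<le> B" unfolding B_def .
    qed simp
    finally show ?thesis .
  qed
  have "(\<integral>\<^sup>+ x. ennreal (\<bar>c * u x\<bar> powr h x) \<partial>lborel) \<le> (\<integral>\<^sup>+ x. ennreal B * ennreal (\<bar>u x\<bar> powr h x) \<partial>lborel)"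
    by (intro nn_integral_mono) (use pt B0 in \<open>simp add: ennreal_mult[symmetric]\<close>)
  also have "\<dots> = ennreal B * (\<integral>\<^sup>+ x. ennreal (\<bar>u x\<bar> powr h x) \<partial>lborel)"
    by (rule nn_integral_cmult) measurable
  also have "\<dots> < \<infinity>" using fin by (simp add: ennreal_mult_less_top)
  finally show ?thesis unfolding lp_mem_def by simp
qed

lemma grad_works:
  assumes "u \<in> sobW p"
  shows "weak_grad u (grad p u) \<and> lp_mem p (\<lambda>x. norm (grad p u x))"
proof -
  obtain g where "weak_grad u g \<and> lp_mem p (\<lambda>x. norm (g x))" using assms unfolding sobW_def by blast
  then show ?thesis unfolding grad_def by (rule someI[where P="\<lambda>g. weak_grad u g \<and> lp_mem p (\<lambda>x. norm (g x))"])
qed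

lemma sobW_scale:
  fixes u :: "'a::euclidean_space \<Rightarrow> real"
  assumes u: "u \<in> sobW p" and p: "\<And>x. 0 \<le> p x" "\<And>x. p x \<le> P" and pm: "p \<in> borel_measurable lborel"
  shows "(\<lambda>x. c * u x) \<in> sobW p"
proof -
  have lu: "lp_mem p u" using u unfolding sobW_def by auto
  note gw = grad_works[OF u]
  have "lp_mem p (\<lambda>x. \<bar>c\<bar> * norm (grad p u x))"
    by (rule lp_mem_scale[OF conjunct2[OF gw] p pm])
  then have "lp_mem p (\<lambda>x. norm (c *\<^sub>R grad p u x))" by simp
  moreover have "weak_grad (\<lambda>x. c * u x) (\<lambda>x. c *\<^sub>R grad p u x)" by (rule weak_grad_scale[OF conjunct1[OF gw]])
  moreover have "lp_mem p (\<lambda>x. c * u x)" by (rule lp_mem_scale[OF lu p pm])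
  ultimately show ?thesis unfolding sobW_def by blast
qed

lemma grad_scale_AE:
  fixes u :: "'a::euclidean_space \<Rightarrow> real"
  assumes u: "u \<in> sobW p" and p: "\<And>x. 0 \<le> p x" "\<And>x. p x \<le> P" and pm: "p \<in> borel_measurable lborel"
  shows "AE x in lborel. grad p (\<lambda>x. c * u x) x = c *\<^sub>R grad p u x"
proof -
  have "weak_grad (\<lambda>x. c * u x) (grad p (\<lambda>x. c * u x))"
    using grad_works[OF sobW_scale[OF u p pm]] by blast
  moreover have "weak_grad (\<lambda>x. c * u x) (\<lambda>x. c *\<^sub>R grad p u x)"
    using weak_grad_scale grad_works[OF u] by blast
  ultimately show ?thesis by (rule weak_grad_unique)
qed


lemma lux_inf:
  fixes \<Phi> :: "real \<Rightarrow> ennreal"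
  assumes mono: "\<And>s s'. 0 < s \<Longrightarrow> s \<le> s' \<Longrightarrow> \<Phi> s' \<le> \<Phi> s" and ne: "0 < s0" "\<Phi> s0 \<le> 1"
  shows "0 \<le> Inf {s. 0 < s \<and> \<Phi> s \<le> 1}"
    and "\<And>s. Inf {s. 0 < s \<and> \<Phi> s \<le> 1} < s \<Longrightarrow> 0 < s \<and> \<Phi> s \<le> 1"
    and "\<And>s. 0 < s \<Longrightarrow> \<Phi> s \<le> 1 \<Longrightarrow> Inf {s. 0 < s \<and> \<Phi> s \<le> 1} \<le> s"
    and "\<And>s. 0 < s \<Longrightarrow> s < Inf {s. 0 < s \<and> \<Phi> s \<le> 1} \<Longrightarrow> 1 < \<Phi> s"
proof -
  define S where "S = {s. 0 < s \<and> \<Phi> s \<le> 1}"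
  have Sne: "S \<noteq> {}" using ne unfolding S_def by auto
  have bdd: "bdd_below S" unfolding S_def by (rule bdd_belowI[of _ 0]) auto
  show L0: "0 \<le> Inf {s. 0 < s \<and> \<Phi> s \<le> 1}"
    unfolding S_def[symmetric] using Sne by (intro cInf_greatest) (auto simp: S_def)
  show up: "Inf {s. 0 < s \<and> \<Phi> s \<le> 1} < s \<Longrightarrow> 0 < s \<and> \<Phi> s \<le> 1" for s
  proof -
    assume "Inf {s. 0 < s \<and> \<Phi> s \<le> 1} < s"
    then have "Inf S < s" unfolding S_def .
    then obtain s' where "s' \<in> S" "s' < s" using cInf_lessD[OF Sne] by blast
    then show ?thesis using mono[of s' s] unfolding S_def by (auto intro: order_trans)
  qed
  show low: "0 < s \<Longrightarrow> \<Phi> s \<le> 1 \<Longrightarrow> Inf {s. 0 < s \<and> \<Phi> s \<le> 1} \<le> s" for s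
    unfolding S_def[symmetric] using bdd by (intro cInf_lower) (auto simp: S_def)
  show "0 < s \<Longrightarrow> s < Inf {s. 0 < s \<and> \<Phi> s \<le> 1} \<Longrightarrow> 1 < \<Phi> s" for s
    using low[of s] by (meson not_le order_less_le_trans)
qed

lemma periodic_bounded:
  fixes f :: "'a::euclidean_space \<Rightarrow> real"
  assumes c: "continuous_on UNIV f" and per: "Z_periodic f"
  shows "\<exists>B. \<forall>x. \<bar>f x\<bar> \<le> B"
proof -
  have "compact (f ` cbox 0 One)"
    by (rule compact_continuous_image[OF continuous_on_subset[OF c] compact_cbox]) auto
  then obtain B where B: "\<And>y. y \<in> cbox 0 One \<Longrightarrow> \<bar>f y\<bar> \<le> B"
    using compact_imp_bounded bounded_iff by (metis imageI real_norm_def)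
  have "\<bar>f x\<bar> \<le> B" for x
  proof -
    define z :: 'a where "z = (\<Sum>i\<in>Basis. of_int \<lfloor>x \<bullet> i\<rfloor> *\<^sub>R i)"
    have zi: "z \<bullet> i = of_int \<lfloor>x \<bullet> i\<rfloor>" if "i \<in> Basis" for i
      unfolding z_def using that by (simp add: inner_sum_left inner_Basis if_distrib cong: if_cong)
    have "(\<forall>i\<in>Basis. z \<bullet> i \<in> \<int>)" using zi by auto
    then have "f ((x - z) + z) = f (x - z)" using per unfolding Z_periodic_def by blast
    moreover have "x - z \<in> cbox 0 One"
      unfolding mem_box using zi
      by (auto simp: inner_diff_left) (metis of_int_floor_le add.commute floor_correct less_eq_real_def
          diff_le_eq real_of_int_floor_add_one_gt)+
    ultimately show ?thesis using B by simp
  qed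
  then show ?thesis by blast
qed


lemma exp_quad_bound:
  fixes y :: real assumes "\<bar>y\<bar> \<le> 1"
  shows "\<bar>exp y - 1 - y\<bar> \<le> y^2"
proof (cases "y \<ge> 0")
  case True
  have "1 + y \<le> exp y" by (rule exp_ge_add_one_self)
  moreover have "exp y \<le> 1 + y + y^2" using exp_bound[of y] assms True by auto
  moreover have "0 \<le> y^2" by simp
  ultimately show ?thesis unfolding abs_le_iff by linarith
next
  case False
  define z where "z = - y"
  have z: "0 < z" "z \<le> 1" using False assms by (auto simp: z_def)
  have "exp z \<ge> 1 + z" by simp
  then have "exp y \<le> 1 / (1 + z)" using z by (simp add: z_def exp_minus field_simps)
  also have "\<dots> \<le> 1 - z + z^2"
  proof -
    have "(1 - z + z^2) * (1 + z) = 1 + z^3" by (simp add: algebra_simps power2_eq_square power3_eq_cube)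
    then have "1 \<le> (1 - z + z^2) * (1 + z)" using z by simp
    then show ?thesis using z by (simp add: field_simps)
  qed
  finally have "exp y \<le> 1 + y + y^2" by (simp add: z_def)
  moreover have "1 + y \<le> exp y" by (rule exp_ge_add_one_self)
  moreover have "0 \<le> y^2" by simp
  ultimately show ?thesis unfolding abs_le_iff by linarith
qed

lemma powr_taylor:
  fixes s e hi :: real
  assumes e: "0 < e" "e \<le> hi" and s: "\<bar>s - 1\<bar> \<le> 1/2" "\<bar>s - 1\<bar> * (2 * hi) \<le> 1"
  shows "\<bar>s powr e - 1 - e * (s - 1)\<bar> \<le> (4 * hi^2 + 2 * hi) * (s - 1)^2"
proof -
  have s0: "s > 0" using abs_le_D2[OF s(1)] by linarith
  define t where "t = ln s"
  have lt: "\<bar>t - (s - 1)\<bar> \<le> 2 * (s - 1)^2"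
    using abs_ln_one_plus_x_minus_x_bound[of "s - 1"] s unfolding t_def by simp
  have "(s - 1)^2 = \<bar>s - 1\<bar> * \<bar>s - 1\<bar>" by (simp add: power2_eq_square abs_mult[symmetric])
  also have "\<dots> \<le> \<bar>s - 1\<bar> * (1/2)" using s(1) by (intro mult_left_mono) auto
  finally have "(s - 1)^2 \<le> \<bar>s - 1\<bar> * (1/2)" .
  moreover have "\<bar>t\<bar> \<le> \<bar>t - (s - 1)\<bar> + \<bar>s - 1\<bar>" using abs_triangle_ineq[of "t - (s-1)" "s-1"] by simp
  moreover have aux: "\<And>(T::real) a A Q. T \<le> A + a \<Longrightarrow> A \<le> 2*Q \<Longrightarrow> Q \<le> a * (1/2) \<Longrightarrow> T \<le> 2*a"
    by linarith
  ultimately have tb: "\<bar>t\<bar> \<le> 2 * \<bar>s - 1\<bar>" using lt by blast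
  have hi0: "hi > 0" using e by simp
  have et: "\<bar>e * t\<bar> \<le> 2 * hi * \<bar>s - 1\<bar>"
  proof -
    have "\<bar>e * t\<bar> = e * \<bar>t\<bar>" using e by (simp add: abs_mult)
    also have "\<dots> \<le> hi * (2 * \<bar>s - 1\<bar>)" using e tb by (intro mult_mono) auto
    finally show ?thesis by simp
  qed
  then have et1: "\<bar>e * t\<bar> \<le> 1" using s(2) by (simp add: mult.commute)
  have "s powr e = exp (e * t)" using s0 by (simp add: powr_def t_def mult.commute)
  then have "s powr e - 1 - e * (s - 1) = (exp (e * t) - 1 - e * t) + e * (t - (s - 1))"
    by (simp add: algebra_simps)
  then have "\<bar>s powr e - 1 - e * (s - 1)\<bar> = \<bar>(exp (e * t) - 1 - e * t) + e * (t - (s - 1))\<bar>" by simp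
  also have "\<dots> \<le> \<bar>exp (e * t) - 1 - e * t\<bar> + \<bar>e * (t - (s - 1))\<bar>" by (rule abs_triangle_ineq)
  finally have A: "\<bar>s powr e - 1 - e * (s - 1)\<bar> \<le> \<bar>exp (e * t) - 1 - e * t\<bar> + \<bar>e * (t - (s - 1))\<bar>" .
  have B: "\<bar>e * (t - (s - 1))\<bar> \<le> hi * (2 * (s - 1)^2)"
    using e lt by (simp add: abs_mult) (intro mult_mono, auto)
  have C: "\<bar>exp (e * t) - 1 - e * t\<bar> \<le> (2 * hi * \<bar>s - 1\<bar>)^2"
    using exp_quad_bound[OF et1] et by (metis abs_ge_zero power2_abs power_mono order_trans)
  have "(2 * hi * \<bar>s - 1\<bar>)^2 = 4 * hi^2 * (s - 1)^2" by (simp add: power_mult_distrib power2_abs)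
  then show ?thesis using A B C by (simp add: algebra_simps)
qed


lemma powr_le_max: fixes s e hi :: real shows "0 < s \<Longrightarrow> 0 \<le> e \<Longrightarrow> e \<le> hi \<Longrightarrow> s powr e \<le> max 1 s powr hi"
proof -
  assume s: "0 < s" and e: "0 \<le> e" "e \<le> hi"
  have "s powr e \<le> max 1 s powr e" by (intro powr_mono2) (use s e in auto)
  also have "\<dots> \<le> max 1 s powr hi" by (intro powr_mono) (use e in auto)
  finally show ?thesis .
qed

lemma powr_ge_min: fixes s e hi :: real shows "0 < s \<Longrightarrow> 0 \<le> e \<Longrightarrow> e \<le> hi \<Longrightarrow> min 1 (s powr hi) \<le> s powr e"
proof -
  assume s: "0 < s" and e: "0 \<le> e" "e \<le> hi"
  show ?thesis
  proof (cases "s \<ge> 1")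
    case True then have "1 \<le> s powr e" by (intro ge_one_powr_ge_zero) (use e in auto)
    then show ?thesis by simp
  next
    case False then have "s powr hi \<le> s powr e" by (intro powr_mono') (use s e in auto)
    then show ?thesis by simp
  qed
qed

lemma deriv_powr_int:
  fixes e w :: "'a::euclidean_space \<Rightarrow> real"
  assumes wm[measurable]: "w \<in> borel_measurable lborel" and em[measurable]: "e \<in> borel_measurable lborel"
    and w0: "\<And>x. 0 \<le> w x" and lo: "0 < lo" "\<And>x. lo \<le> e x" and hi: "\<And>x. e x \<le> hi"
  shows "((\<lambda>s. \<integral>x. s powr e x * w x \<partial>lborel) has_real_derivative (\<integral>x. e x * w x \<partial>lborel)) (at 1)"
proof (cases "integrable lborel w")
  case True
  note wi = True
  have hi0: "hi > 0" using lo(1) lo(2)[of undefined] hi[of undefined] by linarith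
  have e0: "\<And>x. 0 < e x" using lo by (metis order_less_le_trans)
  define F where "F = (\<lambda>s. \<integral>x. s powr e x * w x \<partial>lborel)"
  define D where "D = (\<integral>x. e x * w x \<partial>lborel)"
  define C where "C = 4 * hi^2 + 2 * hi"
  define J where "J = (\<integral>x. w x \<partial>lborel)"
  have J0: "J \<ge> 0" unfolding J_def using w0 by simp
  have C0: "C \<ge> 0" unfolding C_def using hi0 by simp
  have iS: "integrable lborel (\<lambda>x. s powr e x * w x)" if s: "0 < s" for s
  proof (rule Bochner_Integration.integrable_bound[where f="\<lambda>x. max 1 s powr hi * w x"])
    show "integrable lborel (\<lambda>x. max 1 s powr hi * w x)" using wi by simp
    show "(\<lambda>x. s powr e x * w x) \<in> borel_measurable lborel" by measurable
    show "AE x in lborel. norm (s powr e x * w x) \<le> norm (max 1 s powr hi * w x)"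
      using powr_le_max[OF s less_imp_le[OF e0] hi] w0 by (intro AE_I2) (simp add: abs_mult mult_right_mono)
  qed
  have ie: "integrable lborel (\<lambda>x. e x * w x)"
  proof (rule Bochner_Integration.integrable_bound[where f="\<lambda>x. hi * w x"])
    show "integrable lborel (\<lambda>x. hi * w x)" using wi by simp
    show "(\<lambda>x. e x * w x) \<in> borel_measurable lborel" by measurable
    show "AE x in lborel. norm (e x * w x) \<le> norm (hi * w x)"
      using hi w0 e0 hi0 by (intro AE_I2) (simp add: abs_mult mult_right_mono less_imp_le)
  qed
  have F1: "F 1 = J" unfolding F_def J_def by simp
  have key: "\<bar>(F s - F 1) / (s - 1) - D\<bar> \<le> \<bar>s - 1\<bar> * (C * J)"
    if s1: "\<bar>s - 1\<bar> \<le> 1/2" "\<bar>s - 1\<bar> * (2 * hi) \<le> 1" "s \<noteq> 1" for s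
  proof -
    have s0: "0 < s" using abs_le_D2[OF s1(1)] by linarith
    have "F s - F 1 - (s - 1) * D = (\<integral>x. (s powr e x - 1 - e x * (s - 1)) * w x \<partial>lborel)"
    proof -
      have "F s - F 1 - (s - 1) * D = (\<integral>x. s powr e x * w x \<partial>lborel) - (\<integral>x. w x \<partial>lborel) - (\<integral>x. (s - 1) * (e x * w x) \<partial>lborel)"
        using F1 unfolding F_def D_def J_def by simp
      also have "\<dots> = (\<integral>x. s powr e x * w x - w x - (s - 1) * (e x * w x) \<partial>lborel)"
        using iS[OF s0] wi ie by simp
      also have "\<dots> = (\<integral>x. (s powr e x - 1 - e x * (s - 1)) * w x \<partial>lborel)"
        by (rule Bochner_Integration.integral_cong) (auto simp: algebra_simps)
      finally show ?thesis .
    qed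
    also have "\<bar>\<dots>\<bar> \<le> (\<integral>x. \<bar>(s powr e x - 1 - e x * (s - 1)) * w x\<bar> \<partial>lborel)"
      by (rule integral_abs_bound)
    also have "\<dots> \<le> (\<integral>x. (C * (s - 1)^2) * w x \<partial>lborel)"
    proof (rule integral_mono)
      have "integrable lborel (\<lambda>x. s powr e x * w x - w x - (s - 1) * (e x * w x))"
        using iS[OF s0] wi ie by (intro Bochner_Integration.integrable_diff integrable_mult_right) auto
      moreover have "(\<lambda>x. s powr e x * w x - w x - (s - 1) * (e x * w x)) = (\<lambda>x. (s powr e x - 1 - e x * (s - 1)) * w x)"
        by (auto simp: algebra_simps)
      ultimately have "integrable lborel (\<lambda>x. (s powr e x - 1 - e x * (s - 1)) * w x)" by simp
      then show "integrable lborel (\<lambda>x. \<bar>(s powr e x - 1 - e x * (s - 1)) * w x\<bar>)"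
        by (rule integrable_abs)
      show "integrable lborel (\<lambda>x. C * (s - 1)\<^sup>2 * w x)" using wi by simp
      fix x
      have "\<bar>s powr e x - 1 - e x * (s - 1)\<bar> \<le> C * (s - 1)^2"
        unfolding C_def by (rule powr_taylor[OF e0 hi s1(1,2)])
      then show "\<bar>(s powr e x - 1 - e x * (s - 1)) * w x\<bar> \<le> C * (s - 1)\<^sup>2 * w x"
        using w0[of x] by (simp add: abs_mult mult_right_mono)
    qed
    also have "\<dots> = C * (s - 1)^2 * J" unfolding J_def by simp
    finally have A: "\<bar>F s - F 1 - (s - 1) * D\<bar> \<le> C * (s - 1)^2 * J" .
    have "(F s - F 1) / (s - 1) - D = (F s - F 1 - (s - 1) * D) / (s - 1)"
      using s1(3) by (simp add: field_simps)
    then have "\<bar>(F s - F 1) / (s - 1) - D\<bar> = \<bar>F s - F 1 - (s - 1) * D\<bar> / \<bar>s - 1\<bar>" by simp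
    also have "\<dots> \<le> C * (s - 1)^2 * J / \<bar>s - 1\<bar>" using A by (intro divide_right_mono) auto
    also have "\<dots> = \<bar>s - 1\<bar> * (C * J)"
    proof -
      have sq: "(s - 1)^2 = \<bar>s - 1\<bar> * \<bar>s - 1\<bar>" by (simp add: power2_eq_square)
      have nz: "\<bar>s - 1\<bar> \<noteq> 0" using s1(3) by simp
      show ?thesis unfolding sq using nz by (simp add: field_simps)
    qed
    finally show ?thesis .
  qed
  have ev: "eventually (\<lambda>s. norm ((F s - F 1) / (s - 1) - D) \<le> norm (s - 1) * (C * J)) (at 1)"
  proof -
    define d where "d = min (1/2) (1 / (2 * hi))"
    have d: "d > 0" using hi0 by (simp add: d_def)
    show ?thesis unfolding eventually_at
    proof (intro exI[of _ d] conjI ballI impI)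
      show "d > 0" by (rule d)
      fix s :: real assume "s \<in> UNIV" "s \<noteq> 1 \<and> dist s 1 < d"
      then have "\<bar>s - 1\<bar> < d" "s \<noteq> 1" by (auto simp: dist_real_def)
      then have "\<bar>s - 1\<bar> \<le> 1/2" "\<bar>s - 1\<bar> * (2 * hi) \<le> 1"
        using hi0 by (auto simp: d_def field_simps)
      then show "norm ((F s - F 1) / (s - 1) - D) \<le> norm (s - 1) * (C * J)"
        using key \<open>s \<noteq> 1\<close> by simp
    qed
  qed
  have "((\<lambda>s. s - 1) \<longlongrightarrow> 0) (at (1::real))"
    by (intro tendsto_eq_intros) auto
  then have "((\<lambda>s. (F s - F 1) / (s - 1) - D) \<longlongrightarrow> 0) (at 1)"
    by (rule tendsto_0_le[OF _ ev])
  then have "((\<lambda>s. (F s - F 1) / (s - 1) - D + D) \<longlongrightarrow> 0 + D) (at 1)"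
    by (intro tendsto_add tendsto_const)
  then have "((\<lambda>s. (F s - F 1) / (s - 1)) \<longlongrightarrow> D) (at 1)" by simp
  then show ?thesis unfolding F_def D_def by (simp add: has_field_derivative_iff)
next
  case False
  have hi0: "hi > 0" using lo(1) lo(2)[of undefined] hi[of undefined] by linarith
  have e0: "\<And>x. 0 < e x" using lo by (metis order_less_le_trans)
  have nis: "\<not> integrable lborel (\<lambda>x. s powr e x * w x)" if s: "0 < s" for s
  proof
    assume i: "integrable lborel (\<lambda>x. s powr e x * w x)"
    define m where "m = min 1 (s powr hi)"
    have m: "m > 0" using s by (simp add: m_def)
    have "integrable lborel w"
    proof (rule Bochner_Integration.integrable_bound[where f="\<lambda>x. (1/m) * (s powr e x * w x)"])
      show "integrable lborel (\<lambda>x. 1 / m * (s powr e x * w x))" using i by simp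
      show "w \<in> borel_measurable lborel" by measurable
      show "AE x in lborel. norm (w x) \<le> norm (1 / m * (s powr e x * w x))"
      proof (rule AE_I2)
        fix x
        have "m \<le> s powr e x" unfolding m_def by (rule powr_ge_min[OF s less_imp_le[OF e0] hi])
        then have "m * w x \<le> s powr e x * w x" using w0[of x] by (rule mult_right_mono)
        then have "w x \<le> 1 / m * (s powr e x * w x)" using m by (simp add: field_simps)
        then show "norm (w x) \<le> norm (1 / m * (s powr e x * w x))" using w0[of x] m by simp
      qed
    qed
    then show False using False by simp
  qed
  have nie: "\<not> integrable lborel (\<lambda>x. e x * w x)"
  proof
    assume i: "integrable lborel (\<lambda>x. e x * w x)"
    have "integrable lborel w"
    proof (rule Bochner_Integration.integrable_bound[where f="\<lambda>x. (1/lo) * (e x * w x)"])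
      show "integrable lborel (\<lambda>x. 1 / lo * (e x * w x))" using i by simp
      show "w \<in> borel_measurable lborel" by measurable
      show "AE x in lborel. norm (w x) \<le> norm (1 / lo * (e x * w x))"
      proof (rule AE_I2)
        fix x
        have "lo * w x \<le> e x * w x" using w0[of x] lo(2)[of x] by (rule mult_right_mono[rotated])
        then have "w x \<le> 1 / lo * (e x * w x)" using lo by (simp add: field_simps)
        moreover have "0 \<le> 1 / lo * (e x * w x)" using w0[of x] e0[of x] lo(1) by simp
        ultimately show "norm (w x) \<le> norm (1 / lo * (e x * w x))" using w0[of x] by (simp only: real_norm_def abs_of_nonneg)
      qed
    qed
    then show False using False by simp
  qed
  have d0: "((\<lambda>s. 0) has_real_derivative 0) (at 1)" by simp
  have eq0: "\<And>s. s \<in> {0<..} \<Longrightarrow> 0 = (\<integral>x. s powr e x * w x \<partial>lborel)"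
  proof -
    fix s :: real assume "s \<in> {0<..}"
    then have "\<not> integrable lborel (\<lambda>x. s powr e x * w x)" using nis by simp
    then show "0 = (\<integral>x. s powr e x * w x \<partial>lborel)" by (rule not_integrable_integral_eq[symmetric])
  qed
  have "((\<lambda>s. \<integral>x. s powr e x * w x \<partial>lborel) has_real_derivative 0) (at 1)"
    by (rule has_field_derivative_transform_within_open[OF d0 open_greaterThan _ eq0]) simp_all
  moreover have "(\<integral>x. e x * w x \<partial>lborel) = 0" by (rule not_integrable_integral_eq[OF nie])
  ultimately show ?thesis by simp
qed


lemma div_powr_eq: "0 < (s::real) \<Longrightarrow> (a / s) powr e = s powr (- e) * a powr e"
  by (simp add: powr_divide powr_minus_divide)

lemma powr_neg_bound_ge1: "1 \<le> (s::real) \<Longrightarrow> pm \<le> e \<Longrightarrow> s powr (- e) \<le> s powr (- pm)"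
  by (intro powr_mono) auto

lemma powr_neg_bound_le1: "0 < (s::real) \<Longrightarrow> s \<le> 1 \<Longrightarrow> e \<le> pM \<Longrightarrow> s powr (- e) \<le> s powr (- pM)"
  by (intro powr_mono') auto

lemma nn_mod_bound:
  fixes A e :: "'a::euclidean_space \<Rightarrow> real"
  assumes Ai: "integrable lborel A" and A0: "\<And>x. 0 \<le> A x"
    and em: "e \<in> borel_measurable lborel"
    and s: "0 < s" and B: "\<And>x. s powr (- e x) \<le> B"
  shows "(\<integral>\<^sup>+ x. ennreal (s powr (- e x) * A x) \<partial>lborel) \<le> ennreal (B * (\<integral>x. A x \<partial>lborel))"
proof -
  have "(\<integral>\<^sup>+ x. ennreal (s powr (- e x) * A x) \<partial>lborel) \<le> (\<integral>\<^sup>+ x. ennreal (B * A x) \<partial>lborel)"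
    using B A0 by (intro nn_integral_mono ennreal_leI mult_right_mono) auto
  also have "\<dots> = ennreal (\<integral>x. B * A x \<partial>lborel)"
  proof (rule nn_integral_eq_integral)
    show "integrable lborel (\<lambda>x. B * A x)" using Ai by simp
    have "0 \<le> B" using B[of undefined] by (meson order_trans powr_ge_zero)
    then show "AE x in lborel. 0 \<le> B * A x" using A0 by simp
  qed
  also have "\<dots> = ennreal (B * (\<integral>x. A x \<partial>lborel))" by simp
  finally show ?thesis .
qed

lemma wnorm_props:
  fixes p V :: "'a::euclidean_space \<Rightarrow> real" and u :: "'a \<Rightarrow> real"
  assumes u: "u \<in> sobW p"
    and pm[measurable]: "p \<in> borel_measurable lborel" and Vm[measurable]: "V \<in> borel_measurable lborel"
    and V0: "\<And>x. 0 \<le> V x" and p1: "1 \<le> pm" "\<And>x. pm \<le> p x" "\<And>x. p x \<le> pM"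
    and Ai: "integrable lborel (\<lambda>x. norm (grad p u x) powr p x + V x * \<bar>u x\<bar> powr p x)"
  defines "\<rho> \<equiv> (\<integral>x. norm (grad p u x) powr p x + V x * \<bar>u x\<bar> powr p x \<partial>lborel)"
  shows "0 \<le> wnorm V p u" "0 \<le> \<rho>" "wnorm V p u \<le> 1 + \<rho>"
    "\<And>s. wnorm V p u < s \<Longrightarrow> 0 < s \<and>
        (\<integral>\<^sup>+ x. ennreal ((norm (grad p u x) / s) powr p x + V x * (\<bar>u x\<bar> / s) powr p x) \<partial>lborel) \<le> 1"
    "\<rho> \<le> 1 \<Longrightarrow> wnorm V p u \<le> \<rho> powr (1 / pM)"
proof -
  have um[measurable]: "u \<in> borel_measurable lborel" using u unfolding sobW_def lp_mem_def by auto
  have gm[measurable]: "grad p u \<in> borel_measurable lborel"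
    using grad_works[OF u] unfolding weak_grad_def by auto
  define A where "A = (\<lambda>x. norm (grad p u x) powr p x + V x * \<bar>u x\<bar> powr p x)"
  have A0: "\<And>x. 0 \<le> A x" unfolding A_def using V0 by simp
  have Ai': "integrable lborel A" using Ai unfolding A_def .
  define \<Phi> where "\<Phi> = (\<lambda>s. \<integral>\<^sup>+ x. ennreal ((norm (grad p u x) / s) powr p x + V x * (\<bar>u x\<bar> / s) powr p x) \<partial>lborel)"
  have wdef: "wnorm V p u = Inf {s. 0 < s \<and> \<Phi> s \<le> 1}" unfolding wnorm_def \<Phi>_def ..
  have pp: "\<And>x. 0 \<le> p x" using p1 by (meson order_trans zero_le_one)
  have \<Phi>eq: "\<Phi> s = (\<integral>\<^sup>+ x. ennreal (s powr (- p x) * A x) \<partial>lborel)" if s: "0 < s" for s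
    unfolding \<Phi>_def A_def using s by (intro nn_integral_cong) (simp add: div_powr_eq algebra_simps)
  have monoP: "\<Phi> s' \<le> \<Phi> s" if "0 < s" "s \<le> s'" for s s'
    unfolding \<Phi>_def
  proof (intro nn_integral_mono ennreal_leI add_mono mult_left_mono)
    fix x
    show "(norm (grad p u x) / s') powr p x \<le> (norm (grad p u x) / s) powr p x"
      using that pp[of x] by (intro powr_mono2 divide_left_mono) auto
    show "(\<bar>u x\<bar> / s') powr p x \<le> (\<bar>u x\<bar> / s) powr p x"
      using that pp[of x] by (intro powr_mono2 divide_left_mono) auto
    show "0 \<le> V x" by (rule V0)
  qed
  have \<rho>A: "\<rho> = (\<integral>x. A x \<partial>lborel)" unfolding \<rho>_def A_def ..
  show \<rho>0: "0 \<le> \<rho>" unfolding \<rho>A using A0 by simp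
  define s0 where "s0 = 1 + \<rho>"
  have s01: "1 \<le> s0" using \<rho>0 by (simp add: s0_def)
  have \<Phi>s0: "\<Phi> s0 \<le> 1"
  proof -
    have a: "\<Phi> s0 \<le> ennreal (s0 powr (- pm) * \<rho>)" unfolding \<Phi>eq[OF order_less_le_trans[OF zero_less_one s01]] \<rho>A
      by (rule nn_mod_bound[OF Ai' A0 pm]) (use s01 p1 in \<open>auto intro: powr_neg_bound_ge1\<close>)
    have "s0 powr (- pm) * \<rho> \<le> s0 powr (- 1) * \<rho>"
      using s01 p1 \<rho>0 by (intro mult_right_mono powr_mono) auto
    also have "s0 powr (- 1) * \<rho> \<le> 1"
      using s01 by (simp add: powr_minus_divide s0_def)
    finally have "s0 powr (- pm) * \<rho> \<le> 1" .
    from order_trans[OF a ennreal_leI[OF this]] show ?thesis by simp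
  qed
  have s00: "0 < s0" using s01 by simp
  have monoP': "\<And>s s'. 0 < s \<Longrightarrow> s \<le> s' \<Longrightarrow> \<Phi> s' \<le> \<Phi> s" using monoP by blast
  have L1: "0 \<le> wnorm V p u" unfolding wdef by (rule lux_inf(1)[of \<Phi>, OF monoP' s00 \<Phi>s0])
  have L2: "\<And>s. wnorm V p u < s \<Longrightarrow> 0 < s \<and> \<Phi> s \<le> 1" unfolding wdef by (rule lux_inf(2)[of \<Phi>, OF monoP' s00 \<Phi>s0])
  have L3: "\<And>s. 0 < s \<Longrightarrow> \<Phi> s \<le> 1 \<Longrightarrow> wnorm V p u \<le> s" unfolding wdef by (rule lux_inf(3)[of \<Phi>, OF monoP' s00 \<Phi>s0])
  show "0 \<le> wnorm V p u" by (rule L1)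
  show "wnorm V p u \<le> 1 + \<rho>" using L3[OF s00 \<Phi>s0] by (simp add: s0_def)
  show "\<And>s. wnorm V p u < s \<Longrightarrow> 0 < s \<and>
        (\<integral>\<^sup>+ x. ennreal ((norm (grad p u x) / s) powr p x + V x * (\<bar>u x\<bar> / s) powr p x) \<partial>lborel) \<le> 1"
    using L2 unfolding \<Phi>_def by blast
  have small: "wnorm V p u \<le> s" if s: "0 < s" "s \<le> 1" "\<rho> \<le> s powr pM" for s
  proof -
    have a: "\<Phi> s \<le> ennreal (s powr (- pM) * \<rho>)" unfolding \<Phi>eq[OF s(1)] \<rho>A
      by (rule nn_mod_bound[OF Ai' A0 pm s(1)]) (use s p1 in \<open>auto intro: powr_neg_bound_le1\<close>)
    have "s powr (- pM) * \<rho> \<le> 1"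
      using s by (simp add: powr_minus_divide field_simps)
    from order_trans[OF a ennreal_leI[OF this]] have "\<Phi> s \<le> 1" by simp
    then show ?thesis using L3[OF s(1)] by blast
  qed
  assume \<rho>1: "\<rho> \<le> 1"
  have pM0: "pM > 0" using p1(1) p1(2)[of undefined] p1(3)[of undefined] by linarith
  show "wnorm V p u \<le> \<rho> powr (1 / pM)"
  proof (cases "\<rho> = 0")
    case False
    then have \<rho>p: "\<rho> > 0" using \<rho>0 by simp
    show ?thesis
    proof (rule small)
      show "0 < \<rho> powr (1 / pM)" using \<rho>p by simp
      show "\<rho> powr (1 / pM) \<le> 1" using \<rho>1 \<rho>0 pM0 by (intro powr_le1) auto
      show "\<rho> \<le> (\<rho> powr (1 / pM)) powr pM" using \<rho>p pM0 by (simp add: powr_powr)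
    qed
  next
    case True
    have "wnorm V p u \<le> 0"
    proof (rule field_le_epsilon)
      fix e :: real assume e: "0 < e"
      have "wnorm V p u \<le> min e 1" using e True by (intro small) auto
      then show "wnorm V p u \<le> 0 + e" by simp
    qed
    then show ?thesis using True by simp
  qed
qed


lemma lux_bound:
  fixes ps :: "'a::euclidean_space \<Rightarrow> real" and u :: "'a \<Rightarrow> real"
  assumes um[measurable]: "u \<in> borel_measurable lborel" and psm[measurable]: "ps \<in> borel_measurable lborel"
    and a: "1 \<le> a" "\<And>x. a \<le> ps x"
    and Xi: "integrable lborel (\<lambda>x. \<bar>u x\<bar> powr ps x)"
    and L1: "lux ps u < 1"
  shows "(\<integral>x. \<bar>u x\<bar> powr ps x \<partial>lborel) powr (1 / a) \<le> lux ps u"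
proof -
  define X where "X = (\<integral>x. \<bar>u x\<bar> powr ps x \<partial>lborel)"
  have X0: "X \<ge> 0" unfolding X_def by simp
  define \<Phi> where "\<Phi> = (\<lambda>s. \<integral>\<^sup>+ x. ennreal ((\<bar>u x\<bar> / s) powr ps x) \<partial>lborel)"
  have ldef: "lux ps u = Inf {s. 0 < s \<and> \<Phi> s \<le> 1}" unfolding lux_def \<Phi>_def ..
  have pp: "\<And>x. 0 \<le> ps x" using a by (meson order_trans zero_le_one)
  have \<Phi>eq: "\<Phi> s = (\<integral>\<^sup>+ x. ennreal (s powr (- ps x) * \<bar>u x\<bar> powr ps x) \<partial>lborel)" if s: "0 < s" for s
    unfolding \<Phi>_def using s by (intro nn_integral_cong) (simp add: div_powr_eq)
  have monoP': "\<And>s s'. 0 < s \<Longrightarrow> s \<le> s' \<Longrightarrow> \<Phi> s' \<le> \<Phi> s"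
    unfolding \<Phi>_def
  proof (intro nn_integral_mono ennreal_leI)
    fix s s' :: real and x assume "0 < s" "s \<le> s'"
    then show "(\<bar>u x\<bar> / s') powr ps x \<le> (\<bar>u x\<bar> / s) powr ps x"
      using pp[of x] by (intro powr_mono2 divide_left_mono) auto
  qed
  define s0 where "s0 = 1 + X"
  have s01: "1 \<le> s0" using X0 by (simp add: s0_def)
  have s00: "0 < s0" using s01 by simp
  have \<Phi>s0: "\<Phi> s0 \<le> 1"
  proof -
    have A: "\<Phi> s0 \<le> ennreal (s0 powr (- a) * X)" unfolding \<Phi>eq[OF s00] X_def
      by (rule nn_mod_bound[OF Xi _ psm s00]) (use s01 a in \<open>auto intro: powr_neg_bound_ge1\<close>)
    have "s0 powr (- a) * X \<le> s0 powr (- 1) * X"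
      using s01 a X0 by (intro mult_right_mono powr_mono) auto
    also have "s0 powr (- 1) * X \<le> 1"
      using s01 by (simp add: powr_minus_divide s0_def)
    finally have "s0 powr (- a) * X \<le> 1" .
    from order_trans[OF A ennreal_leI[OF this]] show ?thesis by simp
  qed
  have L0: "0 \<le> lux ps u" unfolding ldef by (rule lux_inf(1)[of \<Phi>, OF monoP' s00 \<Phi>s0])
  have L2: "\<And>s. lux ps u < s \<Longrightarrow> 0 < s \<and> \<Phi> s \<le> 1" unfolding ldef by (rule lux_inf(2)[of \<Phi>, OF monoP' s00 \<Phi>s0])
  have Xs: "X \<le> s powr a" if s: "lux ps u < s" "s < 1" for s
  proof -
    have sp: "0 < s" and \<Phi>s: "\<Phi> s \<le> 1" using L2[OF s(1)] by auto
    have "ennreal X = (\<integral>\<^sup>+ x. ennreal (\<bar>u x\<bar> powr ps x) \<partial>lborel)"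
      unfolding X_def by (rule nn_integral_eq_integral[OF Xi, symmetric]) simp
    also have "\<dots> = (\<integral>\<^sup>+ x. ennreal (s powr ps x * (s powr (- ps x) * \<bar>u x\<bar> powr ps x)) \<partial>lborel)"
      using sp by (intro nn_integral_cong) (simp add: powr_minus_divide)
    also have "\<dots> \<le> (\<integral>\<^sup>+ x. ennreal (s powr a) * ennreal (s powr (- ps x) * \<bar>u x\<bar> powr ps x) \<partial>lborel)"
    proof (intro nn_integral_mono)
      fix x
      have "s powr ps x \<le> s powr a" using sp s(2) a(2)[of x] by (intro powr_mono') auto
      then have "s powr ps x * (s powr (- ps x) * \<bar>u x\<bar> powr ps x) \<le> s powr a * (s powr (- ps x) * \<bar>u x\<bar> powr ps x)"
        by (intro mult_right_mono) auto
      then show "ennreal (s powr ps x * (s powr (- ps x) * \<bar>u x\<bar> powr ps x))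
          \<le> ennreal (s powr a) * ennreal (s powr (- ps x) * \<bar>u x\<bar> powr ps x)"
        by (simp add: ennreal_mult[symmetric] ennreal_leI)
    qed
    also have "\<dots> = ennreal (s powr a) * \<Phi> s"
      unfolding \<Phi>eq[OF sp] by (rule nn_integral_cmult) measurable
    also have "\<dots> \<le> ennreal (s powr a) * 1" using \<Phi>s by (intro mult_left_mono) auto
    finally have "ennreal X \<le> ennreal (s powr a)" by simp
    then show ?thesis by (simp add: ennreal_le_iff)
  qed
  show ?thesis
  proof (rule ccontr)
    assume "\<not> (\<integral>x. \<bar>u x\<bar> powr ps x \<partial>lborel) powr (1 / a) \<le> lux ps u"
    then have lt: "lux ps u < X powr (1 / a)" unfolding X_def by simp
    define s where "s = (lux ps u + min 1 (X powr (1 / a))) / 2"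
    have s1: "lux ps u < s" "s < 1" "s < X powr (1 / a)" using lt L1 by (auto simp: s_def)
    have "s powr a < (X powr (1 / a)) powr a"
      using s1 L0 a by (intro powr_less_mono2) auto
    also have "\<dots> = X" using X0 a by (simp add: powr_powr)
    finally show False using Xs[OF s1(1,2)] by simp
  qed
qed


lemma int_le_cmp:
  fixes f g :: "'a::euclidean_space \<Rightarrow> real"
  assumes fm: "f \<in> borel_measurable lborel" and gm: "g \<in> borel_measurable lborel"
    and g0: "\<And>x. 0 \<le> g x" and gf: "\<And>x. g x \<le> f x" and fg: "\<And>x. f x \<le> K * g x"
  shows "(\<integral>x. g x \<partial>lborel) \<le> (\<integral>x. f x \<partial>lborel)"
proof (cases "integrable lborel f")
  case True
  have "integrable lborel g"
    by (rule Bochner_Integration.integrable_bound[OF True gm]) (use g0 gf in \<open>auto intro!: AE_I2 intro: order_trans[OF _ abs_ge_self]\<close>)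
  then show ?thesis using True gf by (intro integral_mono) auto
next
  case False
  have "\<not> integrable lborel g"
  proof
    assume "integrable lborel g"
    then have "integrable lborel (\<lambda>x. K * g x)" by simp
    moreover have "AE x in lborel. norm (f x) \<le> norm (K * g x)"
      using g0 gf fg by (intro AE_I2) (metis abs_of_nonneg order_trans real_norm_def)
    ultimately have "integrable lborel f"
      by (rule Bochner_Integration.integrable_bound[OF _ fm])
    then show False using False by simp
  qed
  then show ?thesis using False by (simp add: not_integrable_integral_eq)
qed

context
  fixes p q V :: "'a::euclidean_space \<Rightarrow> real" and \<mu> pm pM qm qM psM :: real
  assumes pmeas[measurable]: "p \<in> borel_measurable lborel"
    and qmeas[measurable]: "q \<in> borel_measurable lborel"
    and Vmeas[measurable]: "V \<in> borel_measurable lborel"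
    and V0: "\<And>x. 0 \<le> V x"
    and pb: "1 \<le> pm" "\<And>x. pm \<le> p x" "\<And>x. p x \<le> pM"
    and qb: "pM < qm" "\<And>x. qm \<le> q x" "\<And>x. q x \<le> qM"
    and psb: "\<And>x. qm \<le> pstar p x" "\<And>x. pstar p x \<le> psM"
    and mu: "0 < \<mu>"
begin

lemma psmeas[measurable]: "pstar p \<in> borel_measurable lborel"
  unfolding pstar_def[abs_def] by measurable

lemma p_pos: "0 < p x" using pb(1) pb(2)[of x] by linarith
lemma q_pos: "0 < q x" using pb(1) pb(2)[of x] pb(3)[of x] qb(1) qb(2)[of x] by linarith
lemma ps_pos: "0 < pstar p x" using pb(1) pb(2)[of x] pb(3)[of x] qb(1) psb(1)[of x] by linarith

lemma Irep:
  assumes v: "v \<in> sobW p" and s: "0 < s"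
  shows "I_inf \<mu> p q V (\<lambda>x. s * v x) =
     (\<integral>x. s powr p x * ((1 / p x) * (norm (grad p v x) powr p x + V x * \<bar>v x\<bar> powr p x)) \<partial>lborel)
     - \<mu> * (\<integral>x. s powr q x * (\<bar>v x\<bar> powr q x / q x) \<partial>lborel)
     - (\<integral>x. s powr pstar p x * (\<bar>v x\<bar> powr pstar p x / pstar p x) \<partial>lborel)"
proof -
  have p0: "\<And>x. 0 \<le> p x" using p_pos less_imp_le by blast
  have vm[measurable]: "v \<in> borel_measurable lborel" using v unfolding sobW_def lp_mem_def by auto
  have gm[measurable]: "grad p v \<in> borel_measurable lborel"
    using grad_works[OF v] unfolding weak_grad_def by auto
  have sv: "(\<lambda>x. s * v x) \<in> sobW p" by (rule sobW_scale[OF v p0 pb(3) pmeas])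
  have gsm[measurable]: "grad p (\<lambda>x. s * v x) \<in> borel_measurable lborel"
    using grad_works[OF sv] unfolding weak_grad_def by auto
  have AE: "AE x in lborel. grad p (\<lambda>x. s * v x) x = s *\<^sub>R grad p v x"
    by (rule grad_scale_AE[OF v p0 pb(3) pmeas])
  have e1: "(\<integral>x. (1 / p x) * (norm (grad p (\<lambda>x. s * v x) x) powr p x + V x * \<bar>s * v x\<bar> powr p x) \<partial>lborel)
     = (\<integral>x. s powr p x * ((1 / p x) * (norm (grad p v x) powr p x + V x * \<bar>v x\<bar> powr p x)) \<partial>lborel)"
  proof (rule integral_cong_AE)
    show "(\<lambda>x. 1 / p x * (norm (grad p (\<lambda>x. s * v x) x) powr p x + V x * \<bar>s * v x\<bar> powr p x)) \<in> borel_measurable lborel"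
      by measurable
    show "(\<lambda>x. s powr p x * (1 / p x * (norm (grad p v x) powr p x + V x * \<bar>v x\<bar> powr p x))) \<in> borel_measurable lborel"
      by measurable
    show "AE x in lborel. 1 / p x * (norm (grad p (\<lambda>x. s * v x) x) powr p x + V x * \<bar>s * v x\<bar> powr p x) =
        s powr p x * (1 / p x * (norm (grad p v x) powr p x + V x * \<bar>v x\<bar> powr p x))"
      using AE
    proof eventually_elim
      case (elim x)
      then show ?case using s by (simp add: abs_mult powr_mult algebra_simps)
    qed
  qed
  have e2: "(\<integral>x. \<bar>s * v x\<bar> powr q x / q x \<partial>lborel) = (\<integral>x. s powr q x * (\<bar>v x\<bar> powr q x / q x) \<partial>lborel)"
    using s by (intro Bochner_Integration.integral_cong) (auto simp: abs_mult powr_mult)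
  have e3: "(\<integral>x. \<bar>s * v x\<bar> powr pstar p x / pstar p x \<partial>lborel)
      = (\<integral>x. s powr pstar p x * (\<bar>v x\<bar> powr pstar p x / pstar p x) \<partial>lborel)"
    using s by (intro Bochner_Integration.integral_cong) (auto simp: abs_mult powr_mult)
  show ?thesis unfolding I_inf_def e1 e2 e3 ..
qed

lemma Ideriv:
  assumes v: "v \<in> sobW p"
  shows "I_inf_deriv \<mu> p q V v (\<lambda>x. c * v x) =
     ((\<integral>x. p x * ((1 / p x) * (norm (grad p v x) powr p x + V x * \<bar>v x\<bar> powr p x)) \<partial>lborel)
     - \<mu> * (\<integral>x. q x * (\<bar>v x\<bar> powr q x / q x) \<partial>lborel)
     - (\<integral>x. pstar p x * (\<bar>v x\<bar> powr pstar p x / pstar p x) \<partial>lborel)) * c"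
proof -
  have vm[measurable]: "v \<in> borel_measurable lborel" using v unfolding sobW_def lp_mem_def by auto
  have gm[measurable]: "grad p v \<in> borel_measurable lborel"
    using grad_works[OF v] unfolding weak_grad_def by auto
  define F where "F = (\<lambda>s. (\<integral>x. s powr p x * ((1 / p x) * (norm (grad p v x) powr p x + V x * \<bar>v x\<bar> powr p x)) \<partial>lborel)
     - \<mu> * (\<integral>x. s powr q x * (\<bar>v x\<bar> powr q x / q x) \<partial>lborel)
     - (\<integral>x. s powr pstar p x * (\<bar>v x\<bar> powr pstar p x / pstar p x) \<partial>lborel))"
  define Fd where "Fd = ((\<integral>x. p x * ((1 / p x) * (norm (grad p v x) powr p x + V x * \<bar>v x\<bar> powr p x)) \<partial>lborel)
     - \<mu> * (\<integral>x. q x * (\<bar>v x\<bar> powr q x / q x) \<partial>lborel)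
     - (\<integral>x. pstar p x * (\<bar>v x\<bar> powr pstar p x / pstar p x) \<partial>lborel))"
  have qm0: "0 < qm" using pb(1) pb(2)[of undefined] pb(3)[of undefined] qb(1) by linarith
  have d1: "((\<lambda>s. \<integral>x. s powr p x * ((1 / p x) * (norm (grad p v x) powr p x + V x * \<bar>v x\<bar> powr p x)) \<partial>lborel)
      has_real_derivative (\<integral>x. p x * ((1 / p x) * (norm (grad p v x) powr p x + V x * \<bar>v x\<bar> powr p x)) \<partial>lborel)) (at 1)"
    by (rule deriv_powr_int[where lo=pm and hi=pM]) (use pb p_pos V0 in \<open>auto intro!: divide_nonneg_pos add_nonneg_nonneg\<close>)
  have d2: "((\<lambda>s. \<integral>x. s powr q x * (\<bar>v x\<bar> powr q x / q x) \<partial>lborel)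
      has_real_derivative (\<integral>x. q x * (\<bar>v x\<bar> powr q x / q x) \<partial>lborel)) (at 1)"
    by (rule deriv_powr_int[where lo=qm and hi=qM]) (use qb qm0 q_pos in \<open>auto intro!: divide_nonneg_pos\<close>)
  have d3: "((\<lambda>s. \<integral>x. s powr pstar p x * (\<bar>v x\<bar> powr pstar p x / pstar p x) \<partial>lborel)
      has_real_derivative (\<integral>x. pstar p x * (\<bar>v x\<bar> powr pstar p x / pstar p x) \<partial>lborel)) (at 1)"
    by (rule deriv_powr_int[where lo=qm and hi=psM]) (use psb qm0 ps_pos in \<open>auto intro!: divide_nonneg_pos\<close>)
  have dF: "(F has_real_derivative Fd) (at 1)"
    unfolding F_def Fd_def by (intro DERIV_diff DERIV_cmult d1 d2 d3)
  then have dF': "(F has_real_derivative Fd) (at (1 + 0 * c))" by simp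
  have dl: "((\<lambda>t. 1 + t * c) has_real_derivative c) (at 0)"
    by (auto intro!: derivative_eq_intros)
  have dG: "((\<lambda>t. F (1 + t * c)) has_real_derivative Fd * c) (at 0)"
    using DERIV_chain2[OF dF' dl] .
  have opn: "open {t::real. 0 < 1 + t * c}"
    by (rule open_Collect_less) (auto intro!: continuous_intros)
  have eq: "F (1 + t * c) = I_inf \<mu> p q V (\<lambda>x. v x + t * (c * v x))" if "t \<in> {t. 0 < 1 + t * c}" for t
  proof -
    have "(\<lambda>x. v x + t * (c * v x)) = (\<lambda>x. (1 + t * c) * v x)" by (auto simp: algebra_simps)
    then show ?thesis using Irep[OF v, of "1 + t * c"] that unfolding F_def by simp
  qed
  have "((\<lambda>t. I_inf \<mu> p q V (\<lambda>x. v x + t * (c * v x))) has_real_derivative Fd * c) (at 0)"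
    by (rule has_field_derivative_transform_within_open[OF dG opn _ eq]) simp_all
  then show ?thesis unfolding I_inf_deriv_def Fd_def[symmetric] by (rule DERIV_imp_deriv)
qed

lemma scaled_in:
  assumes v: "v \<in> sobW p"
    and Ai: "integrable lborel (\<lambda>x. norm (grad p v x) powr p x + V x * \<bar>v x\<bar> powr p x)"
  shows "(\<lambda>x. (1 / (wnorm V p v + 1)) * v x) \<in> sobW p"
    "wnorm V p (\<lambda>x. (1 / (wnorm V p v + 1)) * v x) \<le> 1"
proof -
  have p0: "\<And>x. 0 \<le> p x" using p_pos less_imp_le by blast
  note WP = wnorm_props[OF v pmeas Vmeas V0 pb Ai]
  define W where "W = wnorm V p v"
  have W0: "0 \<le> W" using WP(1) unfolding W_def .
  define c where "c = 1 / (W + 1)"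
  have c0: "0 < c" using W0 by (simp add: c_def)
  show sv: "(\<lambda>x. (1 / (wnorm V p v + 1)) * v x) \<in> sobW p" by (rule sobW_scale[OF v p0 pb(3) pmeas])
  have AE: "AE x in lborel. grad p (\<lambda>x. c * v x) x = c *\<^sub>R grad p v x"
    by (rule grad_scale_AE[OF v p0 pb(3) pmeas])
  have vm[measurable]: "v \<in> borel_measurable lborel" using v unfolding sobW_def lp_mem_def by auto
  have "(\<integral>\<^sup>+ x. ennreal ((norm (grad p (\<lambda>x. c * v x) x) / 1) powr p x + V x * (\<bar>c * v x\<bar> / 1) powr p x) \<partial>lborel)
      = (\<integral>\<^sup>+ x. ennreal ((norm (grad p v x) / (W + 1)) powr p x + V x * (\<bar>v x\<bar> / (W + 1)) powr p x) \<partial>lborel)"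
    using AE
  proof (rule nn_integral_cong_AE[OF AE_mp], intro AE_I2 impI)
    fix x assume "grad p (\<lambda>x. c * v x) x = c *\<^sub>R grad p v x"
    then show "ennreal ((norm (grad p (\<lambda>x. c * v x) x) / 1) powr p x + V x * (\<bar>c * v x\<bar> / 1) powr p x)
      = ennreal ((norm (grad p v x) / (W + 1)) powr p x + V x * (\<bar>v x\<bar> / (W + 1)) powr p x)"
      using c0 by (simp add: c_def abs_mult)
  qed
  also have "\<dots> \<le> 1" using WP(4)[of "W + 1"] unfolding W_def by simp
  finally have one: "(\<integral>\<^sup>+ x. ennreal ((norm (grad p (\<lambda>x. c * v x) x) / 1) powr p x + V x * (\<bar>c * v x\<bar> / 1) powr p x) \<partial>lborel) \<le> 1" .
  have "wnorm V p (\<lambda>x. c * v x) \<le> 1"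
    unfolding wnorm_def
    by (rule cInf_lower) (use one in \<open>auto intro: bdd_belowI[of _ 0]\<close>)
  then show "wnorm V p (\<lambda>x. (1 / (wnorm V p v + 1)) * v x) \<le> 1" unfolding c_def W_def .
qed

lemma ps_ineq:
  assumes v: "v \<in> sobW p"
    and Ai: "integrable lborel (\<lambda>x. norm (grad p v x) powr p x + V x * \<bar>v x\<bar> powr p x)"
  shows "(1 / pM - 1 / qm) * (\<integral>x. norm (grad p v x) powr p x + V x * \<bar>v x\<bar> powr p x \<partial>lborel)
     \<le> I_inf \<mu> p q V v + (wnorm V p v + 1) * \<bar>I_inf_deriv \<mu> p q V v (\<lambda>x. (1 / (wnorm V p v + 1)) * v x)\<bar> / qm"
proof -
  have vm[measurable]: "v \<in> borel_measurable lborel" using v unfolding sobW_def lp_mem_def by auto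
  have gm[measurable]: "grad p v \<in> borel_measurable lborel"
    using grad_works[OF v] unfolding weak_grad_def by auto
  note WP = wnorm_props[OF v pmeas Vmeas V0 pb Ai]
  define W where "W = wnorm V p v"
  have W0: "0 \<le> W" using WP(1) unfolding W_def .
  define c where "c = 1 / (W + 1)"
  have c0: "0 < c" using W0 by (simp add: c_def)
  have qm0: "0 < qm" using pb(1) pb(2)[of undefined] pb(3)[of undefined] qb(1) by linarith
  have pMqm: "pM < qm" by (rule qb(1))
  have pM0: "0 < pM" using pb(1) pb(2)[of undefined] pb(3)[of undefined] by linarith
  define A where "A = (\<lambda>x. norm (grad p v x) powr p x + V x * \<bar>v x\<bar> powr p x)"
  have A0: "\<And>x. 0 \<le> A x" unfolding A_def using V0 by simp
  have Ai': "integrable lborel A" using Ai unfolding A_def .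
  define a where "a = (\<lambda>x. (1 / p x) * A x)"
  define b where "b = (\<lambda>x. \<bar>v x\<bar> powr q x / q x)"
  define cc where "cc = (\<lambda>x. \<bar>v x\<bar> powr pstar p x / pstar p x)"
  define Fd where "Fd = ((\<integral>x. p x * a x \<partial>lborel) - \<mu> * (\<integral>x. q x * b x \<partial>lborel) - (\<integral>x. pstar p x * cc x \<partial>lborel))"
  have I: "I_inf \<mu> p q V v = (\<integral>x. a x \<partial>lborel) - \<mu> * (\<integral>x. b x \<partial>lborel) - (\<integral>x. cc x \<partial>lborel)"
    unfolding I_inf_def a_def b_def cc_def A_def ..
  have D: "I_inf_deriv \<mu> p q V v (\<lambda>x. c * v x) = Fd * c"
    unfolding Fd_def a_def b_def cc_def A_def by (rule Ideriv[OF v])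
  have pa: "(\<integral>x. p x * a x \<partial>lborel) = (\<integral>x. A x \<partial>lborel)"
  proof (rule Bochner_Integration.integral_cong)
    fix x show "p x * a x = A x" using p_pos[of x] by (simp add: a_def)
  qed simp
  have ai: "integrable lborel a"
  proof (rule Bochner_Integration.integrable_bound[OF Ai'])
    show "a \<in> borel_measurable lborel" unfolding a_def A_def by measurable
    show "AE x in lborel. norm (a x) \<le> norm (A x)"
    proof (rule AE_I2)
      fix x have "1 / p x \<le> 1" using pb(1) pb(2)[of x] by simp
      then have "1 / p x * A x \<le> 1 * A x" using A0[of x] by (intro mult_right_mono) auto
      then show "norm (a x) \<le> norm (A x)" using A0[of x] p_pos[of x] by (simp add: a_def)
    qed
  qed
  have T1: "(1 / pM - 1 / qm) * (\<integral>x. A x \<partial>lborel) \<le> (\<integral>x. a x \<partial>lborel) - (\<integral>x. A x \<partial>lborel) / qm"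
  proof -
    have "(1 / pM - 1 / qm) * (\<integral>x. A x \<partial>lborel) = (\<integral>x. (1 / pM - 1 / qm) * A x \<partial>lborel)" by simp
    also have "\<dots> \<le> (\<integral>x. a x - A x / qm \<partial>lborel)"
    proof (rule integral_mono)
      show "integrable lborel (\<lambda>x. (1 / pM - 1 / qm) * A x)" using Ai' by simp
      show "integrable lborel (\<lambda>x. a x - A x / qm)" using Ai' ai by simp
      fix x
      have "1 / pM \<le> 1 / p x" using pb(3)[of x] p_pos[of x] by (intro divide_left_mono) auto
      then have "(1 / pM - 1 / qm) * A x \<le> (1 / p x - 1 / qm) * A x" using A0[of x] by (intro mult_right_mono) auto
      also have "\<dots> = a x - A x / qm" by (simp add: a_def algebra_simps)
      finally show "(1 / pM - 1 / qm) * A x \<le> a x - A x / qm" .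
    qed
    also have "\<dots> = (\<integral>x. a x \<partial>lborel) - (\<integral>x. A x \<partial>lborel) / qm" using Ai' ai by simp
    finally show ?thesis .
  qed
  have T2: "(\<integral>x. b x \<partial>lborel) \<le> (\<integral>x. q x * b x \<partial>lborel) / qm"
  proof -
    have "(\<integral>x. b x \<partial>lborel) \<le> (\<integral>x. q x * b x / qm \<partial>lborel)"
    proof (rule int_le_cmp[where K="qM / qm"])
      show "(\<lambda>x. q x * b x / qm) \<in> borel_measurable lborel" unfolding b_def by measurable
      show "b \<in> borel_measurable lborel" unfolding b_def by measurable
      fix x
      show b0: "0 \<le> b x" unfolding b_def using q_pos[of x] by simp
      have "qm * b x \<le> q x * b x" using qb(2)[of x] b0 by (rule mult_right_mono)
      then show "b x \<le> q x * b x / qm" using qm0 by (simp add: field_simps)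
      have "q x * b x \<le> qM * b x" using qb(3)[of x] b0 by (rule mult_right_mono)
      then show "q x * b x / qm \<le> qM / qm * b x" using qm0 by (simp add: field_simps)
    qed
    then show ?thesis by simp
  qed
  have T3: "(\<integral>x. cc x \<partial>lborel) \<le> (\<integral>x. pstar p x * cc x \<partial>lborel) / qm"
  proof -
    have "(\<integral>x. cc x \<partial>lborel) \<le> (\<integral>x. pstar p x * cc x / qm \<partial>lborel)"
    proof (rule int_le_cmp[where K="psM / qm"])
      show "(\<lambda>x. pstar p x * cc x / qm) \<in> borel_measurable lborel" unfolding cc_def by measurable
      show "cc \<in> borel_measurable lborel" unfolding cc_def by measurable
      fix x
      show c0': "0 \<le> cc x" unfolding cc_def using ps_pos[of x] by simp
      have "qm * cc x \<le> pstar p x * cc x" using psb(1)[of x] c0' by (rule mult_right_mono)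
      then show "cc x \<le> pstar p x * cc x / qm" using qm0 by (simp add: field_simps)
      have "pstar p x * cc x \<le> psM * cc x" using psb(2)[of x] c0' by (rule mult_right_mono)
      then show "pstar p x * cc x / qm \<le> psM / qm * cc x" using qm0 by (simp add: field_simps)
    qed
    then show ?thesis by simp
  qed
  have main: "(1 / pM - 1 / qm) * (\<integral>x. A x \<partial>lborel) \<le> I_inf \<mu> p q V v - Fd / qm"
  proof -
    have "I_inf \<mu> p q V v - Fd / qm = ((\<integral>x. a x \<partial>lborel) - (\<integral>x. A x \<partial>lborel) / qm)
       + \<mu> * ((\<integral>x. q x * b x \<partial>lborel) / qm - (\<integral>x. b x \<partial>lborel))
       + ((\<integral>x. pstar p x * cc x \<partial>lborel) / qm - (\<integral>x. cc x \<partial>lborel))"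
      unfolding I Fd_def pa using qm0 by (simp add: field_simps)
    moreover have "0 \<le> \<mu> * ((\<integral>x. q x * b x \<partial>lborel) / qm - (\<integral>x. b x \<partial>lborel))"
      using mu T2 by simp
    ultimately show ?thesis using T1 T3 by linarith
  qed
  have FdI: "Fd = I_inf_deriv \<mu> p q V v (\<lambda>x. c * v x) * (W + 1)"
    using D W0 by (simp add: c_def)
  have "- Fd / qm \<le> \<bar>Fd\<bar> / qm" using qm0 by (intro divide_right_mono) auto
  also have "\<bar>Fd\<bar> = (W + 1) * \<bar>I_inf_deriv \<mu> p q V v (\<lambda>x. c * v x)\<bar>"
    unfolding FdI using W0 by (simp add: abs_mult)
  finally have "I_inf \<mu> p q V v - Fd / qm \<le> I_inf \<mu> p q V v + (W + 1) * \<bar>I_inf_deriv \<mu> p q V v (\<lambda>x. c * v x)\<bar> / qm"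
    by simp
  with main show ?thesis unfolding A_def W_def c_def by simp
qed

end


lemma lp_integrable:
  fixes h u :: "'a::euclidean_space \<Rightarrow> real"
  assumes "lp_mem h u" and hm[measurable]: "h \<in> borel_measurable lborel"
  shows "integrable lborel (\<lambda>x. \<bar>u x\<bar> powr h x)"
proof -
  have um[measurable]: "u \<in> borel_measurable lborel" and fin: "(\<integral>\<^sup>+ x. ennreal (\<bar>u x\<bar> powr h x) \<partial>lborel) < \<infinity>"
    using assms unfolding lp_mem_def by auto
  show ?thesis
  proof (rule integrableI_bounded)
    show "(\<lambda>x. \<bar>u x\<bar> powr h x) \<in> borel_measurable lborel" by measurable
    show "(\<integral>\<^sup>+ x. ennreal (norm (\<bar>u x\<bar> powr h x)) \<partial>lborel) < \<infinity>" using fin by simp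
  qed
qed

lemma A_integrable:
  fixes p V :: "'a::euclidean_space \<Rightarrow> real"
  assumes u: "u \<in> sobW p" and pm[measurable]: "p \<in> borel_measurable lborel"
    and Vm[measurable]: "V \<in> borel_measurable lborel" and V0: "\<And>x. 0 \<le> V x" and VB: "\<And>x. V x \<le> B"
  shows "integrable lborel (\<lambda>x. norm (grad p u x) powr p x + V x * \<bar>u x\<bar> powr p x)"
proof -
  have lu: "lp_mem p u" using u unfolding sobW_def by auto
  have um[measurable]: "u \<in> borel_measurable lborel" using lu unfolding lp_mem_def by auto
  have lg: "lp_mem p (\<lambda>x. norm (grad p u x))" using grad_works[OF u] by blast
  have i1: "integrable lborel (\<lambda>x. norm (grad p u x) powr p x)"
    using lp_integrable[OF lg pm] by simp
  have i2: "integrable lborel (\<lambda>x. \<bar>u x\<bar> powr p x)" by (rule lp_integrable[OF lu pm])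
  have i3: "integrable lborel (\<lambda>x. V x * \<bar>u x\<bar> powr p x)"
  proof (rule Bochner_Integration.integrable_bound[where f="\<lambda>x. B * \<bar>u x\<bar> powr p x"])
    show "integrable lborel (\<lambda>x. B * \<bar>u x\<bar> powr p x)" using i2 by simp
    show "(\<lambda>x. V x * \<bar>u x\<bar> powr p x) \<in> borel_measurable lborel" by measurable
    show "AE x in lborel. norm (V x * \<bar>u x\<bar> powr p x) \<le> norm (B * \<bar>u x\<bar> powr p x)"
    proof (rule AE_I2)
      fix x
      have "V x * \<bar>u x\<bar> powr p x \<le> B * \<bar>u x\<bar> powr p x" using VB[of x] by (intro mult_right_mono) auto
      moreover have "0 \<le> V x * \<bar>u x\<bar> powr p x" using V0[of x] by simp
      ultimately show "norm (V x * \<bar>u x\<bar> powr p x) \<le> norm (B * \<bar>u x\<bar> powr p x)" by simp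
    qed
  qed
  show ?thesis using i1 i3 by simp
qed

theorem lemma2p2:
  fixes p q V :: "'a::euclidean_space \<Rightarrow> real" and \<mu> K d :: real and v :: "nat \<Rightarrow> 'a \<Rightarrow> real"
  assumes dim: "2 \<le> DIM('a)"
    and p_lip: "\<exists>L. L-lipschitz_on UNIV p"
    and q_cont: "continuous_on UNIV q" and V_cont: "continuous_on UNIV V"
    and q_nonneg: "\<forall>x. 0 \<le> q x" and V_nonneg: "\<forall>x. 0 \<le> V x"
    and per: "Z_periodic p" "Z_periodic q" "Z_periodic V"
    and p_bdd: "bdd_below (range p)" "bdd_above (range p)"
    and p_minus: "1 < Inf (range p)"
    and p_plus: "Sup (range p) < real DIM('a)"
    and pq: "Sup (range p) < Inf (range q)"
    and q_pstar: "\<exists>\<epsilon>>0. \<forall>x. q x + \<epsilon> \<le> pstar p x"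
    and V0: "0 < Inf (range V)"
    and mu: "0 < \<mu>"
    and K: "1 \<le> K"
    and sobolev: "\<forall>u \<in> sobW p. lux (pstar p) u \<le> K * wnorm V p u"
    and vW: "\<forall>n. v n \<in> sobW p"
    and PS1: "(\<lambda>n. I_inf \<mu> p q V (v n)) \<longlonglongrightarrow> d"
    and PS2: "\<forall>\<epsilon>>0. eventually (\<lambda>n. \<forall>\<phi>\<in>sobW p. wnorm V p \<phi> \<le> 1 \<longrightarrow>
                 \<bar>I_inf_deriv \<mu> p q V (v n) \<phi>\<bar> \<le> \<epsilon>) sequentially"
    and d: "d < (1 / Sup (range p) - 1 / Inf (range q)) / (2 * K powr Sup (range p))"
  shows "\<exists>n0. \<forall>n\<ge>n0.
    (\<integral>x. \<bar>v n x\<bar> powr pstar p x \<partial>lborel) powr (1 / Inf (range (pstar p)))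
      \<le> K * (\<integral>x. norm (grad p (v n) x) powr p x + V x * \<bar>v n x\<bar> powr p x \<partial>lborel)
              powr (1 / Sup (range p))"
proof -
  define pm where "pm = Inf (range p)"
  define pM where "pM = Sup (range p)"
  define qm where "qm = Inf (range q)"
  define psm where "psm = Inf (range (pstar p))"
  define N where "N = real DIM('a)"
  have pmx: "\<And>x. pm \<le> p x" unfolding pm_def using p_bdd(1) by (simp add: cInf_lower)
  have pMx: "\<And>x. p x \<le> pM" unfolding pM_def using p_bdd(2) by (simp add: cSup_upper)
  have pm1: "1 \<le> pm" using p_minus unfolding pm_def by simp
  have pm1': "1 < pm" using p_minus unfolding pm_def by simp
  have pMN: "pM < N" using p_plus unfolding pM_def N_def .
  have pMqm: "pM < qm" using pq unfolding pM_def qm_def .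
  have pmpM: "pm \<le> pM" using pmx[of undefined] pMx[of undefined] by linarith
  have pM0: "0 < pM" using pm1 pmpM by linarith
  have qbdd: "bdd_below (range q)" using q_nonneg by (intro bdd_belowI[of _ 0]) auto
  have qmx: "\<And>x. qm \<le> q x" unfolding qm_def using qbdd by (simp add: cInf_lower)
  obtain \<epsilon> where \<epsilon>: "\<epsilon> > 0" "\<And>x. q x + \<epsilon> \<le> pstar p x" using q_pstar by blast
  define psM where "psM = N * (pM / (N - pM))"
  have psMx: "pstar p x \<le> psM" for x
  proof -
    have "p x / (N - p x) \<le> pM / (N - pM)"
      using pmx[of x] pm1 pMx[of x] pMN by (intro frac_le) auto
    then have "N * (p x / (N - p x)) \<le> N * (pM / (N - pM))"
      using dim unfolding N_def by (intro mult_left_mono) auto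
    then show ?thesis unfolding pstar_def psM_def N_def by simp
  qed
  have qmps: "qm \<le> pstar p x" for x using qmx[of x] \<epsilon>(1) \<epsilon>(2)[of x] by linarith
  have qM: "q x \<le> psM" for x using \<epsilon>(1) \<epsilon>(2)[of x] psMx[of x] by linarith
  have psbdd: "bdd_below (range (pstar p))" using qmps by (intro bdd_belowI[of _ qm]) auto
  have psmx: "\<And>x. psm \<le> pstar p x" unfolding psm_def using psbdd by (simp add: cInf_lower)
  have ps1: "1 \<le> pstar p x" for x using qmps[of x] pm1 pmpM pMqm by linarith
  have psm1: "1 \<le> psm" unfolding psm_def using ps1 by (intro cInf_greatest) auto
  obtain L where L: "L-lipschitz_on UNIV p" using p_lip by blast
  have pmeas: "p \<in> borel_measurable lborel"
    by (rule cont_meas[OF lipschitz_on_continuous_on[OF L]])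
  have qmeas: "q \<in> borel_measurable lborel" by (rule cont_meas[OF q_cont])
  have Vmeas: "V \<in> borel_measurable lborel" by (rule cont_meas[OF V_cont])
  have psmeas[measurable]: "pstar p \<in> borel_measurable lborel"
    using pmeas unfolding pstar_def[abs_def] by measurable
  have V0': "\<And>x. 0 \<le> V x" using V_nonneg by blast
  obtain B where B: "\<And>x. \<bar>V x\<bar> \<le> B" using periodic_bounded[OF V_cont per(3)] by blast
  have VB: "V x \<le> B" for x using abs_le_D1[OF B[of x]] .
  note ctx = pmeas qmeas Vmeas V0' pm1 pmx pMx pMqm qmx qM qmps psMx mu
  have qm0: "0 < qm" using pM0 pMqm by linarith
  define \<nu> where "\<nu> = 1 / pM - 1 / qm"
  have \<nu>0: "0 < \<nu>" unfolding \<nu>_def using pM0 pMqm by (simp add: frac_less2)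
  have Kp: "1 \<le> K powr pM" using K pM0 by (intro ge_one_powr_ge_zero) auto
  define T where "T = 1 / K powr pM"
  have T0: "0 < T" "T \<le> 1"
  proof -
    have Kp0: "0 < K powr pM" using Kp by linarith
    show "0 < T" using Kp0 by (simp add: T_def)
    show "T \<le> 1" using Kp Kp0 by (simp add: T_def field_simps)
  qed
  have dT: "d < \<nu> * T / 2" using d unfolding \<nu>_def T_def pM_def qm_def by (simp add: mult.commute)
  define g where "g = \<nu> * T - d"
  have "0 < \<nu> * T" using \<nu>0 T0 by simp
  then have g0: "0 < g" using dT unfolding g_def by linarith
  define e' where "e' = min (\<nu> / 2) (g / (3 * (2 + T)))"
  have e'0: "0 < e'" using \<nu>0 g0 T0 by (simp add: e'_def)
  have e'1: "e' \<le> \<nu> / 2" unfolding e'_def by (rule min.cobounded1)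
  have e'2: "(2 + T) * e' \<le> g / 3"
  proof -
    have "e' \<le> g / (3 * (2 + T))" unfolding e'_def by (rule min.cobounded2)
    then have "(2 + T) * e' \<le> (2 + T) * (g / (3 * (2 + T)))" using T0 by (intro mult_left_mono) auto
    also have "\<dots> = g / 3" using T0 by (simp add: field_simps)
    finally show ?thesis .
  qed
  have ev1: "eventually (\<lambda>n. I_inf \<mu> p q V (v n) \<le> d + g / 3) sequentially"
  proof -
    have "eventually (\<lambda>n. dist (I_inf \<mu> p q V (v n)) d < g / 3) sequentially"
      using PS1 g0 unfolding tendsto_iff by (meson divide_pos_pos zero_less_numeral)
    then show ?thesis
    proof eventually_elim
      case (elim n)
      then have "I_inf \<mu> p q V (v n) - d < g / 3" unfolding dist_real_def by linarith
      then show ?case by linarith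
    qed
  qed
  have ev2: "eventually (\<lambda>n. \<forall>\<phi>\<in>sobW p. wnorm V p \<phi> \<le> 1 \<longrightarrow> \<bar>I_inf_deriv \<mu> p q V (v n) \<phi>\<bar> \<le> e' * qm) sequentially"
    using PS2 e'0 qm0 by simp
  obtain n0 where n0: "\<And>n. n \<ge> n0 \<Longrightarrow> I_inf \<mu> p q V (v n) \<le> d + g / 3 \<and>
      (\<forall>\<phi>\<in>sobW p. wnorm V p \<phi> \<le> 1 \<longrightarrow> \<bar>I_inf_deriv \<mu> p q V (v n) \<phi>\<bar> \<le> e' * qm)"
    using eventually_conj[OF ev1 ev2] unfolding eventually_sequentially by blast
  show ?thesis
  proof (intro exI[of _ n0] allI impI)
    fix n assume nn0: "n0 \<le> n"
    define u where "u = v n"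
    have u: "u \<in> sobW p" using vW unfolding u_def by blast
    have um[measurable]: "u \<in> borel_measurable lborel" using u unfolding sobW_def lp_mem_def by auto
    have Ai: "integrable lborel (\<lambda>x. norm (grad p u x) powr p x + V x * \<bar>u x\<bar> powr p x)"
      by (rule A_integrable[OF u pmeas Vmeas V0' VB])
    define \<rho> where "\<rho> = (\<integral>x. norm (grad p u x) powr p x + V x * \<bar>u x\<bar> powr p x \<partial>lborel)"
    define W where "W = wnorm V p u"
    note WP = wnorm_props[OF u pmeas Vmeas V0' pm1 pmx pMx Ai, folded \<rho>_def W_def]
    have In: "I_inf \<mu> p q V u \<le> d + g / 3" and
      Dn: "\<And>\<phi>. \<phi> \<in> sobW p \<Longrightarrow> wnorm V p \<phi> \<le> 1 \<Longrightarrow> \<bar>I_inf_deriv \<mu> p q V u \<phi>\<bar> \<le> e' * qm"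
      using n0[OF nn0] unfolding u_def by auto
    note SI = scaled_in[OF ctx u Ai]
    have der: "\<bar>I_inf_deriv \<mu> p q V u (\<lambda>x. (1 / (W + 1)) * u x)\<bar> \<le> e' * qm"
      using Dn[OF SI(1) SI(2)] unfolding W_def .
    have PI: "\<nu> * \<rho> \<le> I_inf \<mu> p q V u + (W + 1) * \<bar>I_inf_deriv \<mu> p q V u (\<lambda>x. (1 / (W + 1)) * u x)\<bar> / qm"
      using ps_ineq[OF ctx u Ai] unfolding \<nu>_def \<rho>_def W_def .
    have "(W + 1) * \<bar>I_inf_deriv \<mu> p q V u (\<lambda>x. (1 / (W + 1)) * u x)\<bar> / qm \<le> (W + 1) * (e' * qm) / qm"
      using der WP(1) qm0 by (intro divide_right_mono mult_left_mono) auto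
    also have "\<dots> = (W + 1) * e'" using qm0 by simp
    also have "\<dots> \<le> (2 + \<rho>) * e'" using WP(3) e'0 by (intro mult_right_mono) auto
    finally have PI2: "\<nu> * \<rho> \<le> d + g / 3 + (2 + \<rho>) * e'" using PI In by linarith
    have \<rho>T: "\<rho> < T"
    proof (rule ccontr)
      assume "\<not> \<rho> < T"
      then have "T \<le> \<rho>" by simp
      then have "T * (\<nu> - e') \<le> \<rho> * (\<nu> - e')" using e'1 \<nu>0 by (intro mult_right_mono) auto
      also have "\<dots> \<le> d + g / 3 + 2 * e'" using PI2 by (simp add: algebra_simps)
      finally have "\<nu> * T \<le> d + g / 3 + (2 + T) * e'" by (simp add: algebra_simps)
      then have "\<nu> * T \<le> d + 2 * g / 3" using e'2 by linarith
      moreover have "g = \<nu> * T - d" by (simp add: g_def)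
      ultimately show False using g0 by linarith
    qed
    have \<rho>1: "\<rho> \<le> 1" using \<rho>T T0 by linarith
    have W\<rho>: "W \<le> \<rho> powr (1 / pM)" by (rule WP(5)[OF \<rho>1])
    have TK: "T powr (1 / pM) = 1 / K"
      using K pM0 by (simp add: T_def powr_divide powr_powr)
    have \<rho>K: "\<rho> powr (1 / pM) < 1 / K"
    proof -
      have "\<rho> powr (1 / pM) < T powr (1 / pM)"
        by (rule powr_less_mono2) (use \<rho>T WP(2) pM0 in auto)
      then show ?thesis using TK by simp
    qed
    have RHS0: "0 \<le> K * \<rho> powr (1 / pM)" using K by simp
    define X where "X = (\<integral>x. \<bar>u x\<bar> powr pstar p x \<partial>lborel)"
    have goal: "X powr (1 / psm) \<le> K * \<rho> powr (1 / pM)"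
    proof (cases "X = 0")
      case True then show ?thesis using RHS0 by simp
    next
      case False
      then have Xi: "integrable lborel (\<lambda>x. \<bar>u x\<bar> powr pstar p x)"
        unfolding X_def by (meson not_integrable_integral_eq)
      have lux: "lux (pstar p) u \<le> K * W" using sobolev u unfolding W_def by blast
      also have "\<dots> \<le> K * \<rho> powr (1 / pM)" using W\<rho> K by (intro mult_left_mono) auto
      finally have lux2: "lux (pstar p) u \<le> K * \<rho> powr (1 / pM)" .
      also have "\<dots> < K * (1 / K)" using \<rho>K K by (intro mult_strict_left_mono) auto
      also have "\<dots> = 1" using K by simp
      finally have lux1: "lux (pstar p) u < 1" .
      have "X powr (1 / psm) \<le> lux (pstar p) u"
        unfolding X_def by (rule lux_bound[OF um psmeas psm1 psmx Xi lux1])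
      then show ?thesis using lux2 by linarith
    qed
    then show "(\<integral>x. \<bar>v n x\<bar> powr pstar p x \<partial>lborel) powr (1 / Inf (range (pstar p)))
      \<le> K * (\<integral>x. norm (grad p (v n) x) powr p x + V x * \<bar>v n x\<bar> powr p x \<partial>lborel)
              powr (1 / Sup (range p))"
      unfolding X_def \<rho>_def u_def psm_def pM_def .
  qed
qed


end
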